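(* Let $\omega\in P^+$ be minuscule or quasi-minuscule, $\lambda\in P^+$ and $\nu\in W_0\omega$. Exactly one of the following holds: (i) $(\lambda-\nu)_+\neq\lambda$; then $w_{\lambda-\nu}\in W_{0,\lambda}$, and $\theta(\lambda-\nu)=1$ if $\nu\in R(w_{\lambda-\nu})$ while $\theta(\lambda-\nu)=0$ if $\nu\notin R(w_{\lambda-\nu})$. (ii) $(\lambda-\nu)_+=\lambda$; then $w_{\lambda-\nu}\nu=-\alpha_j$ for some $j\in\{1,\dots,n\}$, and moreover $s_jw_{\lambda-\nu}\in W_{0,\lambda}$, $\theta(\lambda-\nu)=0$, $R(w_{\lambda-\nu})=R(s_jw_{\lambda-\nu})\cup\{\nu\}$, and $q_j=q_0$.
   Context: Let $R$ be an irreducible reduced crystallographic root system of rank $n$ spanning a real Euclidean space $V$ with inner product $\langle\cdot,\cdot\rangle$; $\alpha^\vee:=2\alpha/\langle\alpha,\alpha\rangle$; $P$ the weight lattice; $R^+$ positive roots with simple roots $\alpha_1,\dots,\alpha_n$, $R^-:=-R^+$; $P^+$ the dominant weights; $A:=\{x:0<\langle x,\alpha^\vee\rangle<1\ \forall\alpha\in R^+\}$; $\alpha_0\in R^+$ with $\alpha_0^\vee$ the highest root of $R^\vee$. A weight $\omega\in P^+$ is minuscule if $\omega\ne0$ and $\langle\omega,\alpha^\vee\rangle\in\{0,1\}$ for all $\alpha\in R^+$; quasi-minuscule means $\omega=\alpha_0$. $W_0$ finite Weyl group; $W_{0,\lambda}$ the stabilizer of $\lambda$; $W$ the extended affine Weyl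 group generated by $W_0$ and translations by $P$; $s_0$ reflection in $\{\langle x,\alpha_0^\vee\rangle=1\}$, $s_j$ reflection in $\{\langle x,\alpha_j^\vee\rangle=0\}$; $\ell(w)$ = number of hyperplanes $\{\langle x,\alpha^\vee\rangle=k\}$ separating $A$ and $wA$. $q:W\to\mathbb R\setminus\{0\}$ length multiplicative, $q_j:=q_{s_j}$ ($0\le j\le n$). For $\mu\in P$, $w_\mu$ is the shortest element of $W_0$ with $w_\mu\mu\in P^+$, $\mu_+:=w_\mu\mu$. For $w\in W_0$, $R(w):=R^+\cap w^{-1}(R^-)$. $\rho^\vee:=\tfrac12\sum_{\alpha\in R^+}\alpha^\vee$ and $\theta(\mu):=\langle\mu_+-\mu,\rho^\vee\rangle-\ell(w_\mu)$. *)

theory Defs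
  imports "HOL-Analysis.Analysis"
begin

text \<open>Root-system data: V is a Euclidean space 'a; R is the set of roots;
 alpha j (j in 1..n, n = DIM('a)) are the simple roots.\<close>

definition coroot :: "'a::euclidean_space \<Rightarrow> 'a" where
  "coroot a = (2 / (a \<bullet> a)) *\<^sub>R a"

definition rrefl :: "'a::euclidean_space \<Rightarrow> 'a \<Rightarrow> 'a" where
  "rrefl a x = x - (x \<bullet> coroot a) *\<^sub>R a"

definition irreducible_reduced_crystallographic_root_system :: "'a::euclidean_space set \<Rightarrow> bool" where
  "irreducible_reduced_crystallographic_root_system R \<longleftrightarrow>
     finite R \<and> 0 \<notin> R \<and> span R = UNIV \<and>
     (\<forall>a\<in>R. rrefl a ` R = R) \<and>
     (\<forall>a\<in>R. \<forall>b\<in>R. b \<bullet> coroot a \<in> \<int>) \<and>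
     (\<forall>a\<in>R. \<forall>c::real. c *\<^sub>R a \<in> R \<longrightarrow> c = 1 \<or> c = -1) \<and>
     \<not> (\<exists>R1 R2. R1 \<noteq> {} \<and> R2 \<noteq> {} \<and> R = R1 \<union> R2 \<and> (\<forall>a\<in>R1. \<forall>b\<in>R2. a \<bullet> b = 0))"

definition nonneg_int_comb :: "(nat \<Rightarrow> 'a::euclidean_space) \<Rightarrow> 'a set" where
  "nonneg_int_comb f = {x. \<exists>c::nat \<Rightarrow> int. (\<forall>j. c j \<ge> 0) \<and>
        x = (\<Sum>j\<in>{1..DIM('a)}. of_int (c j) *\<^sub>R f j)}"

definition Rplus :: "'a::euclidean_space set \<Rightarrow> (nat \<Rightarrow> 'a) \<Rightarrow> 'a set" where
  "Rplus R alpha = R \<inter> nonneg_int_comb alpha"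

definition Rminus :: "'a::euclidean_space set \<Rightarrow> (nat \<Rightarrow> 'a) \<Rightarrow> 'a set" where
  "Rminus R alpha = uminus ` Rplus R alpha"

definition is_base :: "'a::euclidean_space set \<Rightarrow> (nat \<Rightarrow> 'a) \<Rightarrow> bool" where
  "is_base R alpha \<longleftrightarrow> alpha ` {1..DIM('a)} \<subseteq> R \<and> inj_on alpha {1..DIM('a)} \<and>
     independent (alpha ` {1..DIM('a)}) \<and> R = Rplus R alpha \<union> Rminus R alpha"

text \<open>alpha_0: the positive root whose coroot is the highest root of the dual root system.\<close>
definition alpha0 :: "'a::euclidean_space set \<Rightarrow> (nat \<Rightarrow> 'a) \<Rightarrow> 'a" where
  "alpha0 R alpha = (THE a. a \<in> Rplus R alpha \<and>
      (\<forall>b\<in>Rplus R alpha. coroot a - coroot b \<in> nonneg_int_comb (\<lambda>j. coroot (alpha j))))"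

definition weights :: "'a::euclidean_space set \<Rightarrow> 'a set" where
  "weights R = {x. \<forall>a\<in>R. x \<bullet> coroot a \<in> \<int>}"

definition dominant :: "'a::euclidean_space set \<Rightarrow> (nat \<Rightarrow> 'a) \<Rightarrow> 'a set" where
  "dominant R alpha = {x \<in> weights R. \<forall>a\<in>Rplus R alpha. x \<bullet> coroot a \<ge> 0}"

definition minuscule :: "'a::euclidean_space set \<Rightarrow> (nat \<Rightarrow> 'a) \<Rightarrow> 'a \<Rightarrow> bool" where
  "minuscule R alpha w \<longleftrightarrow> w \<in> dominant R alpha \<and> w \<noteq> 0 \<and>
     (\<forall>a\<in>Rplus R alpha. w \<bullet> coroot a \<in> {0, 1})"

definition quasi_minuscule :: "'a::euclidean_space set \<Rightarrow> (nat \<Rightarrow> 'a) \<Rightarrow> 'a \<Rightarrow> bool" where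
  "quasi_minuscule R alpha w \<longleftrightarrow> w = alpha0 R alpha"

inductive_set W0 :: "'a::euclidean_space set \<Rightarrow> ('a \<Rightarrow> 'a) set" for R where
  W0_id: "id \<in> W0 R"
| W0_step: "w \<in> W0 R \<Longrightarrow> a \<in> R \<Longrightarrow> rrefl a \<circ> w \<in> W0 R"

definition Waff :: "'a::euclidean_space set \<Rightarrow> ('a \<Rightarrow> 'a) set" where
  "Waff R = {f. \<exists>w\<in>W0 R. \<exists>m\<in>weights R. f = (\<lambda>x. w x + m)}"

definition stab :: "'a::euclidean_space set \<Rightarrow> 'a \<Rightarrow> ('a \<Rightarrow> 'a) set" where
  "stab R l = {w \<in> W0 R. w l = l}"

definition alcove :: "'a::euclidean_space set \<Rightarrow> (nat \<Rightarrow> 'a) \<Rightarrow> 'a set" where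
  "alcove R alpha = {x. \<forall>a\<in>Rplus R alpha. 0 < x \<bullet> coroot a \<and> x \<bullet> coroot a < 1}"

text \<open>Length: number of hyperplanes {x. x . a^vee = k} (a positive, k integer)
  separating A and wA.\<close>
definition len :: "'a::euclidean_space set \<Rightarrow> (nat \<Rightarrow> 'a) \<Rightarrow> ('a \<Rightarrow> 'a) \<Rightarrow> nat" where
  "len R alpha w = card {(a, k). a \<in> Rplus R alpha \<and>
      (\<exists>x\<in>alcove R alpha. \<exists>y\<in>alcove R alpha.
         (x \<bullet> coroot a - of_int k) * (w y \<bullet> coroot a - of_int k) < 0)}"

definition length_multiplicative ::
  "'a::euclidean_space set \<Rightarrow> (nat \<Rightarrow> 'a) \<Rightarrow> (('a \<Rightarrow> 'a) \<Rightarrow> real) \<Rightarrow> bool" where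
  "length_multiplicative R alpha q \<longleftrightarrow>
     (\<forall>w\<in>Waff R. q w \<noteq> 0) \<and>
     (\<forall>v\<in>Waff R. \<forall>w\<in>Waff R. len R alpha (v \<circ> w) = len R alpha v + len R alpha w
         \<longrightarrow> q (v \<circ> w) = q v * q w)"

text \<open>s_0: reflection in the hyperplane {x. x . alpha_0^vee = 1}; s_j = s_{alpha_j}.\<close>
definition s0 :: "'a::euclidean_space set \<Rightarrow> (nat \<Rightarrow> 'a) \<Rightarrow> 'a \<Rightarrow> 'a" where
  "s0 R alpha x = x - (x \<bullet> coroot (alpha0 R alpha) - 1) *\<^sub>R alpha0 R alpha"

definition wmin :: "'a::euclidean_space set \<Rightarrow> (nat \<Rightarrow> 'a) \<Rightarrow> 'a \<Rightarrow> ('a \<Rightarrow> 'a)" where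
  "wmin R alpha m = (THE w. w \<in> W0 R \<and> w m \<in> dominant R alpha \<and>
      (\<forall>v\<in>W0 R. v m \<in> dominant R alpha \<longrightarrow> len R alpha w \<le> len R alpha v))"

definition dom_rep :: "'a::euclidean_space set \<Rightarrow> (nat \<Rightarrow> 'a) \<Rightarrow> 'a \<Rightarrow> 'a" where
  "dom_rep R alpha m = wmin R alpha m m"

definition inv_set :: "'a::euclidean_space set \<Rightarrow> (nat \<Rightarrow> 'a) \<Rightarrow> ('a \<Rightarrow> 'a) \<Rightarrow> 'a set" where
  "inv_set R alpha w = {a \<in> Rplus R alpha. w a \<in> Rminus R alpha}"

definition rho_vee :: "'a::euclidean_space set \<Rightarrow> (nat \<Rightarrow> 'a) \<Rightarrow> 'a" where
  "rho_vee R alpha = (1/2) *\<^sub>R (\<Sum>a\<in>Rplus R alpha. coroot a)"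

definition theta :: "'a::euclidean_space set \<Rightarrow> (nat \<Rightarrow> 'a) \<Rightarrow> 'a \<Rightarrow> real" where
  "theta R alpha m = (dom_rep R alpha m - m) \<bullet> rho_vee R alpha - real (len R alpha (wmin R alpha m))"

end

theory Submission imports Defs begin

lemma coroot_zero[simp]: "coroot 0 = 0" by (simp add: coroot_def)

lemma inner_coroot_self: "a \<noteq> 0 \<Longrightarrow> a \<bullet> coroot a = 2"
  by (simp add: coroot_def)

lemma coroot_neg: "coroot (-a) = - coroot a"
  by (simp add: coroot_def)

lemma coroot_nz: "a \<noteq> 0 \<Longrightarrow> coroot a \<noteq> 0"
  by (simp add: coroot_def)

lemma coroot_coroot: "a \<noteq> 0 \<Longrightarrow> coroot (coroot a) = a"
  by (simp add: coroot_def field_simps power2_eq_square)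

lemma coroot_inj: "a \<noteq> 0 \<Longrightarrow> b \<noteq> 0 \<Longrightarrow> coroot a = coroot b \<Longrightarrow> a = b"
  by (metis coroot_coroot)

lemma inner_coroot_swap: "(x \<bullet> coroot a) *\<^sub>R a = (x \<bullet> a) *\<^sub>R coroot a"
  by (simp add: coroot_def)

lemma rrefl_self: "a \<noteq> 0 \<Longrightarrow> rrefl a a = -a"
  by (simp add: rrefl_def inner_coroot_self scaleR_2)

lemma rrefl_rrefl: "a \<noteq> 0 \<Longrightarrow> rrefl a (rrefl a x) = x"
  by (simp add: rrefl_def inner_diff_left inner_coroot_self algebra_simps)

lemma linear_rrefl: "linear (rrefl a)"
  unfolding rrefl_def by (intro linearI) (auto simp: algebra_simps inner_add_left)

lemma rrefl_inner: "a \<noteq> 0 \<Longrightarrow> rrefl a x \<bullet> rrefl a y = x \<bullet> y"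
  by (simp add: rrefl_def coroot_def inner_diff_left inner_diff_right field_simps inner_commute)

lemma rrefl_neg: "rrefl (-a) = rrefl a"
  by (rule ext) (simp add: rrefl_def coroot_neg)

definition orth :: "('a::euclidean_space \<Rightarrow> 'a) \<Rightarrow> bool" where
  "orth f \<longleftrightarrow> linear f \<and> (\<forall>x y. f x \<bullet> f y = x \<bullet> y)"

lemma orth_rrefl: "a \<noteq> 0 \<Longrightarrow> orth (rrefl a)"
  by (simp add: orth_def linear_rrefl rrefl_inner)

lemma orth_id: "orth id" unfolding orth_def id_def by (auto intro: linearI)

lemma orth_comp: "orth f \<Longrightarrow> orth g \<Longrightarrow> orth (f \<circ> g)"
  by (simp add: orth_def linear_compose)

lemma orth_inner: "orth f \<Longrightarrow> f x \<bullet> f y = x \<bullet> y" by (simp add: orth_def)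

lemma orth_linear: "orth f \<Longrightarrow> linear f" by (simp add: orth_def)

lemma orth_add: "orth f \<Longrightarrow> f (x + y) = f x + f y"
  by (simp add: orth_def linear_add)
lemma orth_diff: "orth f \<Longrightarrow> f (x - y) = f x - f y"
  by (simp add: orth_def linear_diff)
lemma orth_scale: "orth f \<Longrightarrow> f (c *\<^sub>R x) = c *\<^sub>R f x"
  by (simp add: orth_def linear_scale)
lemma orth_neg: "orth f \<Longrightarrow> f (- x) = - f x"
  by (simp add: orth_def linear_neg)
lemma orth_zero: "orth f \<Longrightarrow> f 0 = 0"
  by (simp add: orth_def linear_0)

lemma orth_inj: "orth f \<Longrightarrow> f x = f y \<Longrightarrow> x = y"
proof -
  assume o: "orth f" and e: "f x = f y"
  have "(x - y) \<bullet> (x - y) = f (x - y) \<bullet> f (x - y)" using o by (simp add: orth_inner)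
  also have "\<dots> = 0" using e o by (simp add: orth_diff)
  finally show "x = y" by simp
qed

lemma orth_coroot: "orth f \<Longrightarrow> coroot (f a) = f (coroot a)"
  by (simp add: coroot_def orth_inner orth_scale)

lemma orth_rrefl_conj: "orth f \<Longrightarrow> rrefl (f a) (f x) = f (rrefl a x)"
  by (simp add: rrefl_def orth_coroot orth_inner orth_diff orth_scale)


locale rs =
  fixes R :: "'a::euclidean_space set" and alpha :: "nat \<Rightarrow> 'a"
  assumes irr: "irreducible_reduced_crystallographic_root_system R"
    and base: "is_base R alpha"
begin

abbreviation "Rp \<equiv> Rplus R alpha"
abbreviation "Rm \<equiv> Rminus R alpha"

lemma finR: "finite R"
  using irr by (simp add: irreducible_reduced_crystallographic_root_system_def)
lemma zero_notin: "0 \<notin> R"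
  using irr by (simp add: irreducible_reduced_crystallographic_root_system_def)
lemma nz: "a \<in> R \<Longrightarrow> a \<noteq> 0" using zero_notin by auto
lemma refl_closed: "a \<in> R \<Longrightarrow> b \<in> R \<Longrightarrow> rrefl a b \<in> R"
  using irr by (auto simp: irreducible_reduced_crystallographic_root_system_def)
lemma integral: "a \<in> R \<Longrightarrow> b \<in> R \<Longrightarrow> b \<bullet> coroot a \<in> \<int>"
  using irr by (auto simp: irreducible_reduced_crystallographic_root_system_def)
lemma reduced: "a \<in> R \<Longrightarrow> c *\<^sub>R a \<in> R \<Longrightarrow> c = 1 \<or> c = -1"
  using irr by (auto simp: irreducible_reduced_crystallographic_root_system_def)
lemma irred: "R1 \<noteq> {} \<Longrightarrow> R2 \<noteq> {} \<Longrightarrow> R = R1 \<union> R2 \<Longrightarrow> (\<forall>a\<in>R1. \<forall>b\<in>R2. a \<bullet> b = 0) \<Longrightarrow> False"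
  using irr unfolding irreducible_reduced_crystallographic_root_system_def by blast
lemma neg_root: "a \<in> R \<Longrightarrow> -a \<in> R"
  using refl_closed[of a a] rrefl_self[of a] nz by auto

lemma alpha_R: "j \<in> {Suc 0..DIM('a)} \<Longrightarrow> alpha j \<in> R" using base by (auto simp: is_base_def)
lemma alpha_inj: "inj_on alpha {Suc 0..DIM('a)}" using base by (auto simp: is_base_def)
lemma indep: "independent (alpha ` {Suc 0..DIM('a)})" using base by (auto simp: is_base_def)
lemma R_split: "R = Rp \<union> Rm" using base by (auto simp: is_base_def)
lemma Rp_sub: "a \<in> Rp \<Longrightarrow> a \<in> R" by (simp add: Rplus_def)
lemma Rm_iff: "a \<in> Rm \<longleftrightarrow> -a \<in> Rp"
  unfolding Rminus_def by (auto intro: image_eqI[where x="-a"])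
lemma Rm_sub: "a \<in> Rm \<Longrightarrow> a \<in> R" using R_split by auto
lemma finRp: "finite Rp" using finR by (simp add: Rplus_def)

lemma lin_indep:
  assumes s: "(\<Sum>j\<in>{Suc 0..DIM('a)}. r j *\<^sub>R alpha j) = 0" and j: "j \<in> {Suc 0..DIM('a)}"
  shows "r j = 0"
proof -
  define u where "u v = r (inv_into {Suc 0..DIM('a)} alpha v)" for v
  have "(\<Sum>v\<in>alpha`{Suc 0..DIM('a)}. u v *\<^sub>R v) = (\<Sum>j\<in>{Suc 0..DIM('a)}. u (alpha j) *\<^sub>R alpha j)"
    using sum.reindex[OF alpha_inj, of "\<lambda>v. u v *\<^sub>R v"] by (simp add: comp_def)
  also have "\<dots> = (\<Sum>j\<in>{Suc 0..DIM('a)}. r j *\<^sub>R alpha j)"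
    by (rule sum.cong) (auto simp: u_def inv_into_f_f alpha_inj)
  finally have "(\<Sum>v\<in>alpha`{Suc 0..DIM('a)}. u v *\<^sub>R v) = 0" using s by simp
  with indep have "\<forall>v\<in>alpha`{Suc 0..DIM('a)}. u v = 0"
    using dependent_finite[of "alpha ` {Suc 0..DIM('a)}"] by auto
  then have "u (alpha j) = 0" using j by auto
  then show ?thesis by (metis inv_into_f_f[OF alpha_inj j] u_def)
qed

lemma coeff_eq:
  assumes "(\<Sum>j\<in>{Suc 0..DIM('a)}. r j *\<^sub>R alpha j) = (\<Sum>j\<in>{Suc 0..DIM('a)}. s j *\<^sub>R alpha j)" "j \<in> {Suc 0..DIM('a)}"
  shows "r j = s j"
proof -
  have "(\<Sum>j\<in>{Suc 0..DIM('a)}. (r j - s j) *\<^sub>R alpha j) = 0"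
    using assms(1) by (simp add: scaleR_diff_left sum_subtractf)
  from lin_indep[OF this assms(2)] show ?thesis by simp
qed

lemma sum_delta_alpha: "k \<in> {Suc 0..DIM('a)} \<Longrightarrow> (\<Sum>j\<in>{Suc 0..DIM('a)}. (if j = k then t else 0) *\<^sub>R alpha j) = t *\<^sub>R alpha k"
  by (subst sum.cong[OF refl, of _ _ "\<lambda>j. if j = k then t *\<^sub>R alpha k else 0"]) auto

definition C :: "'a set" where
  "C = {x. \<exists>r. (\<forall>j. 0 \<le> r j) \<and> x = (\<Sum>j\<in>{Suc 0..DIM('a)}. r j *\<^sub>R alpha j)}"

lemma C_zero: "0 \<in> C"
  unfolding C_def by (rule CollectI, rule exI[of _ "\<lambda>_. 0"]) simp

lemma C_add: "x \<in> C \<Longrightarrow> y \<in> C \<Longrightarrow> x + y \<in> C"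
  unfolding C_def
proof (clarsimp)
  fix r s :: "nat \<Rightarrow> real" assume "\<forall>j. 0 \<le> r j" "\<forall>j. 0 \<le> s j"
  then show "\<exists>t. (\<forall>j. 0 \<le> t j) \<and> (\<Sum>j\<in>{Suc 0..DIM('a)}. r j *\<^sub>R alpha j) + (\<Sum>j\<in>{Suc 0..DIM('a)}. s j *\<^sub>R alpha j) = (\<Sum>j\<in>{Suc 0..DIM('a)}. t j *\<^sub>R alpha j)"
    by (intro exI[of _ "\<lambda>j. r j + s j"]) (auto simp: scaleR_add_left sum.distrib)
qed

lemma C_scale: "x \<in> C \<Longrightarrow> 0 \<le> t \<Longrightarrow> t *\<^sub>R x \<in> C"
  unfolding C_def
proof (clarsimp)
  fix r :: "nat \<Rightarrow> real" assume "\<forall>j. 0 \<le> r j" "0 \<le> t"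
  then show "\<exists>s. (\<forall>j. 0 \<le> s j) \<and> t *\<^sub>R (\<Sum>j\<in>{Suc 0..DIM('a)}. r j *\<^sub>R alpha j) = (\<Sum>j\<in>{Suc 0..DIM('a)}. s j *\<^sub>R alpha j)"
    by (intro exI[of _ "\<lambda>j. t * r j"]) (auto simp: scaleR_sum_right)
qed

lemma C_alpha: "k \<in> {Suc 0..DIM('a)} \<Longrightarrow> alpha k \<in> C"
  unfolding C_def
  by (rule CollectI, rule exI[of _ "\<lambda>j. if j = k then 1 else 0"]) (simp add: sum_delta_alpha)

lemma C_sum: "finite S \<Longrightarrow> (\<forall>i\<in>S. v i \<in> C) \<Longrightarrow> (\<forall>i\<in>S. 0 \<le> r i) \<Longrightarrow> (\<Sum>i\<in>S. r i *\<^sub>R v i) \<in> C"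
  by (induction S rule: finite_induct) (auto intro: C_add C_scale C_zero)

lemma C_pointed: assumes "x \<in> C" "-x \<in> C" shows "x = 0"
proof -
  obtain r where r: "\<forall>j. 0 \<le> r j" "x = (\<Sum>j\<in>{Suc 0..DIM('a)}. r j *\<^sub>R alpha j)" using assms(1) C_def by auto
  obtain s where s: "\<forall>j. 0 \<le> s j" "-x = (\<Sum>j\<in>{Suc 0..DIM('a)}. s j *\<^sub>R alpha j)" using assms(2) C_def by auto
  have "(\<Sum>j\<in>{Suc 0..DIM('a)}. (r j + s j) *\<^sub>R alpha j) = (\<Sum>j\<in>{Suc 0..DIM('a)}. r j *\<^sub>R alpha j) + (\<Sum>j\<in>{Suc 0..DIM('a)}. s j *\<^sub>R alpha j)"
    by (simp add: scaleR_add_left sum.distrib)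
  also have "\<dots> = x + - x" using r(2) s(2) by simp
  finally have "(\<Sum>j\<in>{Suc 0..DIM('a)}. (r j + s j) *\<^sub>R alpha j) = 0" by simp
  then have "\<forall>j\<in>{Suc 0..DIM('a)}. r j + s j = 0" using lin_indep[of "\<lambda>j. r j + s j"] by auto
  then have "\<forall>j\<in>{Suc 0..DIM('a)}. r j = 0" using r s by (metis add_nonneg_eq_0_iff)
  then show ?thesis using r by simp
qed

lemma Rp_rep: "a \<in> Rp \<Longrightarrow> \<exists>c::nat \<Rightarrow> int. (\<forall>j. 0 \<le> c j) \<and> a = (\<Sum>j\<in>{Suc 0..DIM('a)}. of_int (c j) *\<^sub>R alpha j)"
  by (auto simp: Rplus_def nonneg_int_comb_def)

lemma Rp_C: "a \<in> Rp \<Longrightarrow> a \<in> C"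
proof -
  assume "a \<in> Rp"
  then obtain c :: "nat \<Rightarrow> int" where "\<forall>j. 0 \<le> c j" "a = (\<Sum>j\<in>{Suc 0..DIM('a)}. of_int (c j) *\<^sub>R alpha j)"
    using Rp_rep by blast
  then show "a \<in> C" unfolding C_def by (intro CollectI exI[of _ "\<lambda>j. of_int (c j)"]) auto
qed

lemma Rp_not_Rm: "a \<in> Rp \<Longrightarrow> a \<notin> Rm"
proof
  assume a: "a \<in> Rp" "a \<in> Rm"
  then have "-a \<in> Rp" by (simp add: Rm_iff)
  then have "a = 0" using a C_pointed Rp_C by blast
  then show False using a Rp_sub zero_notin by auto
qed

lemma root_C: "a \<in> R \<Longrightarrow> a \<in> C \<Longrightarrow> a \<in> Rp"
  using R_split Rm_iff C_pointed Rp_C zero_notin by fastforce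

lemma root_negC: "a \<in> R \<Longrightarrow> -a \<in> C \<Longrightarrow> a \<in> Rm"
  using R_split Rm_iff C_pointed Rp_C zero_notin by (metis UnE minus_minus root_C neg_root)

lemma alpha_Rp: "k \<in> {Suc 0..DIM('a)} \<Longrightarrow> alpha k \<in> Rp"
  using root_C alpha_R C_alpha by blast

lemma neg_Rp_Rm: "a \<in> Rp \<Longrightarrow> -a \<in> Rm" by (simp add: Rm_iff)
lemma neg_Rm_Rp: "a \<in> Rm \<Longrightarrow> -a \<in> Rp" by (simp add: Rm_iff)

lemma C_pos_scale: "0 < t \<Longrightarrow> t *\<^sub>R x \<in> C \<longleftrightarrow> x \<in> C"
  using C_scale[of "t *\<^sub>R x" "1/t"] C_scale[of x t] by auto

lemma coroot_C: "coroot a \<in> C \<longleftrightarrow> a \<in> C"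
  by (cases "a = 0") (auto simp: coroot_def C_pos_scale)


subsection \<open>Weyl group basics\<close>

lemma W0_orth: "w \<in> W0 R \<Longrightarrow> orth w"
proof (induction rule: W0.induct)
  case W0_id show ?case by (rule orth_id)
next
  case (W0_step w a)
  from W0_step have "a \<in> R" "orth w" by auto
  then show ?case using orth_comp[OF orth_rrefl[OF nz], of a w] by (simp add: comp_def)
qed

lemma W0_R: "w \<in> W0 R \<Longrightarrow> a \<in> R \<Longrightarrow> w a \<in> R"
  by (induction rule: W0.induct) (auto intro: refl_closed)

lemma W0_comp: "v \<in> W0 R \<Longrightarrow> w \<in> W0 R \<Longrightarrow> v \<circ> w \<in> W0 R"
  by (induction rule: W0.induct) (auto simp: comp_assoc intro: W0.intros)

lemma refl_W0: "a \<in> R \<Longrightarrow> rrefl a \<in> W0 R"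
  using W0_step[OF W0_id, of a R] by simp

lemma rrefl_invol: "a \<noteq> 0 \<Longrightarrow> rrefl a \<circ> rrefl a = id"
  by (rule ext) (simp add: rrefl_rrefl)

lemma W0_inv_ex: "w \<in> W0 R \<Longrightarrow> \<exists>v\<in>W0 R. v \<circ> w = id \<and> w \<circ> v = id"
proof (induction rule: W0.induct)
  case W0_id show ?case by (rule bexI[of _ id]) (simp_all add: W0.W0_id)
next
  case (W0_step w a)
  then obtain v where v: "v \<in> W0 R" "v \<circ> w = id" "w \<circ> v = id" by blast
  have r: "rrefl a \<circ> rrefl a = id" using W0_step nz rrefl_invol by blast
  have "(v \<circ> rrefl a) \<circ> (rrefl a \<circ> w) = v \<circ> (rrefl a \<circ> rrefl a) \<circ> w" by (simp add: comp_assoc)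
  also have "\<dots> = id" using r v by simp
  finally have 1: "(v \<circ> rrefl a) \<circ> (rrefl a \<circ> w) = id" .
  have "(rrefl a \<circ> w) \<circ> (v \<circ> rrefl a) = rrefl a \<circ> (w \<circ> v) \<circ> rrefl a" by (simp add: comp_assoc)
  also have "\<dots> = id" using r v by simp
  finally have 2: "(rrefl a \<circ> w) \<circ> (v \<circ> rrefl a) = id" .
  show ?case using 1 2 W0_comp[OF v(1) refl_W0[OF W0_step(2)]] by blast
qed

definition winv :: "('a \<Rightarrow> 'a) \<Rightarrow> ('a \<Rightarrow> 'a)" where
  "winv w = (SOME v. v \<in> W0 R \<and> v \<circ> w = id \<and> w \<circ> v = id)"

lemma winv: "w \<in> W0 R \<Longrightarrow> winv w \<in> W0 R \<and> winv w \<circ> w = id \<and> w \<circ> winv w = id"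
  unfolding winv_def using W0_inv_ex[of w] by (metis (mono_tags, lifting) someI_ex)

lemma winv_W0: "w \<in> W0 R \<Longrightarrow> winv w \<in> W0 R" using winv by blast
lemma winv_l: "w \<in> W0 R \<Longrightarrow> winv w (w x) = x" using winv by (metis comp_apply id_apply)
lemma winv_r: "w \<in> W0 R \<Longrightarrow> w (winv w x) = x" using winv by (metis comp_apply id_apply)

lemma W0_shift: "w \<in> W0 R \<Longrightarrow> w x \<bullet> y = x \<bullet> winv w y"
proof -
  assume w: "w \<in> W0 R"
  have "w x \<bullet> y = w x \<bullet> w (winv w y)" using winv_r[OF w] by simp
  also have "\<dots> = x \<bullet> winv w y" using W0_orth[OF w] orth_inner by blast
  finally show ?thesis .
qed

lemma W0_coroot: "w \<in> W0 R \<Longrightarrow> coroot (w a) = w (coroot a)"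
  using W0_orth orth_coroot by blast

lemma W0_inner: "w \<in> W0 R \<Longrightarrow> w x \<bullet> w y = x \<bullet> y"
  using W0_orth orth_inner by blast

lemma W0_inj: "w \<in> W0 R \<Longrightarrow> w x = w y \<Longrightarrow> x = y"
  using W0_orth orth_inj by blast

lemma W0_neg: "w \<in> W0 R \<Longrightarrow> w (-x) = - w x"
  using W0_orth orth_neg by blast

lemma W0_weights: "w \<in> W0 R \<Longrightarrow> x \<in> weights R \<Longrightarrow> w x \<in> weights R"
  unfolding weights_def
proof (clarsimp)
  fix a assume w: "w \<in> W0 R" and x: "\<forall>a\<in>R. x \<bullet> coroot a \<in> \<int>" and a: "a \<in> R"
  have "w x \<bullet> coroot a = x \<bullet> winv w (coroot a)" by (rule W0_shift[OF w])
  also have "\<dots> = x \<bullet> coroot (winv w a)" using W0_coroot[OF winv_W0[OF w]] by simp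
  finally show "w x \<bullet> coroot a \<in> \<int>" using x W0_R[OF winv_W0[OF w] a] by simp
qed

lemma root_cases: "a \<in> R \<Longrightarrow> (a \<in> Rp \<Longrightarrow> P) \<Longrightarrow> (a \<in> Rm \<Longrightarrow> P) \<Longrightarrow> P"
  using R_split by blast

lemma W0_pos_simple:
  assumes w: "w \<in> W0 R" and s: "\<forall>k\<in>{Suc 0..DIM('a)}. w (alpha k) \<in> Rp" and a: "a \<in> Rp"
  shows "w a \<in> Rp"
proof -
  obtain c :: "nat \<Rightarrow> int" where c: "\<forall>j. 0 \<le> c j" "a = (\<Sum>j\<in>{Suc 0..DIM('a)}. of_int (c j) *\<^sub>R alpha j)"
    using Rp_rep[OF a] by blast
  have lw: "linear w" using W0_orth[OF w] orth_linear by blast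
  have "w a = (\<Sum>j\<in>{Suc 0..DIM('a)}. of_int (c j) *\<^sub>R w (alpha j))"
    using c(2) by (simp add: linear_sum[OF lw] linear_scale[OF lw])
  also have "\<dots> \<in> C" using s c(1) by (intro C_sum) (auto intro: Rp_C)
  finally show ?thesis using W0_R[OF w Rp_sub[OF a]] root_C by blast
qed

lemma SR:
  assumes k: "k \<in> {Suc 0..DIM('a)}" and a: "a \<in> Rp" and ne: "a \<noteq> alpha k"
  shows "rrefl (alpha k) a \<in> Rp"
proof (rule ccontr)
  let ?b = "rrefl (alpha k) a"
  let ?t = "a \<bullet> coroot (alpha k)"
  have bR: "?b \<in> R" using refl_closed alpha_R[OF k] Rp_sub[OF a] by blast
  assume "?b \<notin> Rp"
  then have "-?b \<in> Rp" using R_split bR Rm_iff by blast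
  then obtain d :: "nat \<Rightarrow> int" where d: "\<forall>j. 0 \<le> d j" "-?b = (\<Sum>j\<in>{Suc 0..DIM('a)}. of_int (d j) *\<^sub>R alpha j)"
    using Rp_rep by blast
  obtain c :: "nat \<Rightarrow> int" where c: "\<forall>j. 0 \<le> c j" "a = (\<Sum>j\<in>{Suc 0..DIM('a)}. of_int (c j) *\<^sub>R alpha j)"
    using Rp_rep[OF a] by blast
  have mb: "-?b = ?t *\<^sub>R alpha k - a" by (simp add: rrefl_def)
  have "(\<Sum>j\<in>{Suc 0..DIM('a)}. (of_int (c j) + of_int (d j) - (if j = k then ?t else 0)) *\<^sub>R alpha j)
      = (\<Sum>j\<in>{Suc 0..DIM('a)}. of_int (c j) *\<^sub>R alpha j) + (\<Sum>j\<in>{Suc 0..DIM('a)}. of_int (d j) *\<^sub>R alpha j)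
        - (\<Sum>j\<in>{Suc 0..DIM('a)}. (if j = k then ?t else 0) *\<^sub>R alpha j)"
    by (simp add: scaleR_add_left scaleR_diff_left sum.distrib sum_subtractf)
  also have "\<dots> = a + (-?b) - ?t *\<^sub>R alpha k" using c d sum_delta_alpha[OF k] by simp
  also have "\<dots> = 0" using mb by simp
  finally have eq: "(\<Sum>j\<in>{Suc 0..DIM('a)}. (of_int (c j) + of_int (d j) - (if j = k then ?t else 0)) *\<^sub>R alpha j) = 0" .
  have cz: "\<forall>j\<in>{Suc 0..DIM('a)}. j \<noteq> k \<longrightarrow> c j = 0"
  proof (intro ballI impI)
    fix j assume j: "j \<in> {Suc 0..DIM('a)}" "j \<noteq> k"
    have "of_int (c j) + of_int (d j) - (if j = k then ?t else 0) = (0::real)"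
      using lin_indep[OF eq j(1)] .
    then have "c j + d j = 0" using j(2) by simp
    then show "c j = 0" using c(1) d(1) by (metis add_nonneg_eq_0_iff)
  qed
  have "a = (\<Sum>j\<in>{Suc 0..DIM('a)}. (if j = k then of_int (c k) else 0) *\<^sub>R alpha j)"
    using c(2) cz by (auto intro!: sum.cong)
  also have "\<dots> = of_int (c k) *\<^sub>R alpha k" by (rule sum_delta_alpha[OF k])
  finally have ak: "a = of_int (c k) *\<^sub>R alpha k" .
  then have "of_int (c k) = (1::real) \<or> of_int (c k) = (-1::real)"
    using reduced[OF alpha_R[OF k]] Rp_sub[OF a] by metis
  then have "c k = 1 \<or> c k = -1" by (metis of_int_eq_1_iff of_int_eq_iff of_int_minus of_int_1)
  then have "c k = 1" using c(1)[rule_format, of k] by auto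
  then show False using ak ne by simp
qed

lemma SR_neg: "k \<in> {Suc 0..DIM('a)} \<Longrightarrow> a \<in> Rp \<Longrightarrow> rrefl (alpha k) a \<in> Rm \<Longrightarrow> a = alpha k"
  using SR Rp_not_Rm by blast

lemma rrefl_alpha_W0: "k \<in> {Suc 0..DIM('a)} \<Longrightarrow> rrefl (alpha k) \<in> W0 R"
  using refl_W0 alpha_R by blast

lemma alpha_nz: "k \<in> {Suc 0..DIM('a)} \<Longrightarrow> alpha k \<noteq> 0" using alpha_R nz by blast

lemma sk_inner_swap: "k \<in> {Suc 0..DIM('a)} \<Longrightarrow> alpha k \<bullet> rrefl (alpha k) y = - (alpha k \<bullet> y)"
proof -
  assume k: "k \<in> {Suc 0..DIM('a)}"
  have o: "orth (rrefl (alpha k))" using orth_rrefl alpha_nz k by blast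
  have "alpha k \<bullet> rrefl (alpha k) y = rrefl (alpha k) (alpha k) \<bullet> rrefl (alpha k) (rrefl (alpha k) y)"
    using orth_inner[OF o] by simp
  also have "\<dots> = - (alpha k \<bullet> y)" using alpha_nz[OF k] by (simp add: rrefl_self rrefl_rrefl)
  finally show ?thesis .
qed

lemma alpha_rho: assumes k: "k \<in> {Suc 0..DIM('a)}" shows "alpha k \<bullet> rho_vee R alpha = 1"
proof -
  let ?s = "rrefl (alpha k)"
  define f where "f a = alpha k \<bullet> coroot a" for a
  let ?T = "Rp - {alpha k}"
  have fin: "finite ?T" using finRp by simp
  have Tb: "a \<in> ?T \<Longrightarrow> ?s a \<in> ?T" for a
  proof -
    assume a: "a \<in> ?T"
    have "?s a \<in> Rp" using SR[OF k] a by blast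
    moreover have "?s a \<noteq> alpha k"
    proof
      assume "?s a = alpha k"
      then have "a = ?s (alpha k)" using rrefl_rrefl alpha_nz[OF k] by metis
      then have "a = - alpha k" using rrefl_self alpha_nz[OF k] by simp
      then show False using a neg_Rp_Rm[OF alpha_Rp[OF k]] Rp_not_Rm by auto
    qed
    ultimately show ?thesis by simp
  qed
  have inv: "?s (?s a) = a" for a using alpha_nz[OF k] by (simp add: rrefl_rrefl)
  have "sum f ?T = sum (\<lambda>a. f (?s a)) ?T"
    using Tb by (intro sum.reindex_bij_witness[of _ ?s ?s]) (auto simp: inv)
  also have "\<dots> = sum (\<lambda>a. - f a) ?T"
  proof (rule sum.cong[OF refl])
    fix a
    have "f (?s a) = alpha k \<bullet> ?s (coroot a)"
      unfolding f_def using orth_coroot[OF orth_rrefl[OF alpha_nz[OF k]]] by simp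
    also have "\<dots> = - f a" using sk_inner_swap[OF k] f_def by simp
    finally show "f (?s a) = - f a" .
  qed
  also have "\<dots> = - sum f ?T" by (simp add: sum_negf)
  finally have T0: "sum f ?T = 0" by simp
  have "sum f Rp = f (alpha k) + sum f ?T"
    using sum.remove[OF finRp alpha_Rp[OF k]] by simp
  also have "\<dots> = 2" using T0 inner_coroot_self[OF alpha_nz[OF k]] f_def by simp
  finally have "sum f Rp = 2" .
  then show ?thesis
    by (simp add: rho_vee_def f_def inner_sum_right)
qed

definition ht :: "'a \<Rightarrow> real" where "ht a = a \<bullet> rho_vee R alpha"

lemma ht_Rp: assumes a: "a \<in> Rp" shows "\<exists>n::nat. ht a = real n \<and> 1 \<le> n"
proof -
  obtain c :: "nat \<Rightarrow> int" where c: "\<forall>j. 0 \<le> c j" "a = (\<Sum>j\<in>{Suc 0..DIM('a)}. of_int (c j) *\<^sub>R alpha j)"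
    using Rp_rep[OF a] by blast
  have "ht a = (\<Sum>j\<in>{Suc 0..DIM('a)}. of_int (c j) * (alpha j \<bullet> rho_vee R alpha))"
    unfolding ht_def using c(2) by (simp add: inner_sum_left)
  also have "\<dots> = of_int (\<Sum>j\<in>{Suc 0..DIM('a)}. c j)" using alpha_rho by simp
  finally have h: "ht a = of_int (\<Sum>j\<in>{Suc 0..DIM('a)}. c j)" .
  have nn: "0 \<le> (\<Sum>j\<in>{Suc 0..DIM('a)}. c j)" using c(1) by (simp add: sum_nonneg)
  have "(\<Sum>j\<in>{Suc 0..DIM('a)}. c j) \<noteq> 0"
  proof
    assume "(\<Sum>j\<in>{Suc 0..DIM('a)}. c j) = 0"
    then have "\<forall>j\<in>{Suc 0..DIM('a)}. c j = 0" using c(1) sum_nonneg_eq_0_iff[of "{Suc 0..DIM('a)}" c] by auto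
    then have "a = 0" using c(2) by simp
    then show False using a Rp_sub zero_notin by auto
  qed
  then show ?thesis using h nn by (intro exI[of _ "nat (\<Sum>j\<in>{Suc 0..DIM('a)}. c j)"]) auto
qed

lemma ht_pos: "a \<in> Rp \<Longrightarrow> 1 \<le> ht a" using ht_Rp by fastforce

lemma exists_simple_pos: assumes a: "a \<in> Rp" shows "\<exists>k\<in>{Suc 0..DIM('a)}. 0 < a \<bullet> alpha k"
proof (rule ccontr)
  assume "\<not> ?thesis"
  then have h: "\<forall>k\<in>{Suc 0..DIM('a)}. a \<bullet> alpha k \<le> 0" by auto
  obtain c :: "nat \<Rightarrow> int" where c: "\<forall>j. 0 \<le> c j" "a = (\<Sum>j\<in>{Suc 0..DIM('a)}. of_int (c j) *\<^sub>R alpha j)"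
    using Rp_rep[OF a] by blast
  have "a \<bullet> a = a \<bullet> (\<Sum>j\<in>{Suc 0..DIM('a)}. of_int (c j) *\<^sub>R alpha j)"
    by (simp only: c(2)[symmetric])
  also have "\<dots> = (\<Sum>j\<in>{Suc 0..DIM('a)}. of_int (c j) * (a \<bullet> alpha j))"
    by (simp add: inner_sum_right)
  also have "\<dots> \<le> 0" using h c(1) by (intro sum_nonpos) (simp add: mult_nonneg_nonpos)
  finally have "a = 0" by (metis inner_gt_zero_iff not_less)
  then show False using a Rp_sub zero_notin by auto
qed

lemma Rp_coroot_rep:
  assumes a: "a \<in> Rp"
  shows "\<exists>d. (\<forall>j. 0 \<le> d j) \<and> coroot a = (\<Sum>j\<in>{Suc 0..DIM('a)}. d j *\<^sub>R coroot (alpha j))"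
proof -
  obtain c :: "nat \<Rightarrow> int" where c: "\<forall>j. 0 \<le> c j" "a = (\<Sum>j\<in>{Suc 0..DIM('a)}. of_int (c j) *\<^sub>R alpha j)"
    using Rp_rep[OF a] by blast
  have an: "a \<bullet> a > 0" using a Rp_sub zero_notin by auto
  define d where "d j = of_int (c j) * (alpha j \<bullet> alpha j) / (a \<bullet> a)" for j
  have "coroot a = (2 / (a \<bullet> a)) *\<^sub>R (\<Sum>j\<in>{Suc 0..DIM('a)}. of_int (c j) *\<^sub>R alpha j)"
    by (simp only: c(2)[symmetric]) (simp add: coroot_def)
  also have "\<dots> = (\<Sum>j\<in>{Suc 0..DIM('a)}. d j *\<^sub>R coroot (alpha j))"
    unfolding scaleR_sum_right
  proof (rule sum.cong[OF refl])
    fix j assume j: "j \<in> {Suc 0..DIM('a)}"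
    have "alpha j \<bullet> alpha j \<noteq> 0" using alpha_nz[OF j] by simp
    then show "(2 / (a \<bullet> a)) *\<^sub>R of_int (c j) *\<^sub>R alpha j = d j *\<^sub>R coroot (alpha j)"
      using an by (simp add: d_def coroot_def)
  qed
  finally show ?thesis using c(1) an by (intro exI[of _ d]) (auto simp: d_def)
qed

lemma dom_simple:
  assumes x: "\<forall>k\<in>{Suc 0..DIM('a)}. 0 \<le> x \<bullet> coroot (alpha k)" and a: "a \<in> Rp"
  shows "0 \<le> x \<bullet> coroot a"
proof -
  obtain d where d: "\<forall>j. 0 \<le> d j" "coroot a = (\<Sum>j\<in>{Suc 0..DIM('a)}. d j *\<^sub>R coroot (alpha j))"
    using Rp_coroot_rep[OF a] by blast
  have "x \<bullet> coroot a = (\<Sum>j\<in>{Suc 0..DIM('a)}. d j * (x \<bullet> coroot (alpha j)))" using d(2) by (simp add: inner_sum_right)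
  also have "\<dots> \<ge> 0" using d(1) x by (intro sum_nonneg) auto
  finally show ?thesis by simp
qed


subsection \<open>Words in simple reflections\<close>

primrec wd :: "nat list \<Rightarrow> 'a \<Rightarrow> 'a" where
  "wd [] = id"
| "wd (j # js) = rrefl (alpha j) \<circ> wd js"

lemma wd_append: "wd (xs @ ys) = wd xs \<circ> wd ys"
  by (induction xs) (auto simp: comp_assoc)

lemma wd_W0: "set js \<subseteq> {Suc 0..DIM('a)} \<Longrightarrow> wd js \<in> W0 R"
proof (induction js)
  case Nil show ?case by (simp only: wd.simps) (rule W0.W0_id)
next
  case (Cons j js) then show ?case using W0.W0_step[of "wd js" R "alpha j"] alpha_R[of j] by (simp add: comp_def)
qed

lemma int_pos_ge1: "(x::real) \<in> \<int> \<Longrightarrow> 0 < x \<Longrightarrow> 1 \<le> x"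
  by (metis Ints_cases of_int_0_less_iff of_int_1_le_iff zless_imp_add1_zle add.left_neutral)

lemma dom_iff: "x \<in> dominant R alpha \<longleftrightarrow> x \<in> weights R \<and> (\<forall>a\<in>Rp. 0 \<le> x \<bullet> coroot a)"
  by (simp add: dominant_def)

lemma weights_int: "x \<in> weights R \<Longrightarrow> a \<in> R \<Longrightarrow> x \<bullet> coroot a \<in> \<int>"
  by (simp add: weights_def)

lemma R_weights: "a \<in> R \<Longrightarrow> a \<in> weights R"
  using integral by (simp add: weights_def)

lemma coroot_alpha_pos: "k \<in> {Suc 0..DIM('a)} \<Longrightarrow> 0 < a \<bullet> alpha k \<Longrightarrow> 0 < a \<bullet> coroot (alpha k)"
  using alpha_nz by (simp add: coroot_def)

lemma ht_induct[consumes 1, case_names simple step]: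
  assumes a0: "a0 \<in> Rp"
    and simple: "\<And>k. k \<in> {Suc 0..DIM('a)} \<Longrightarrow> P (alpha k)"
    and step: "\<And>a k. a \<in> Rp \<Longrightarrow> k \<in> {Suc 0..DIM('a)} \<Longrightarrow> a \<noteq> alpha k \<Longrightarrow> 0 < a \<bullet> alpha k \<Longrightarrow> P (rrefl (alpha k) a) \<Longrightarrow> P a"
  shows "P a0"
proof -
  have "\<forall>a\<in>Rp. ht a \<le> real n \<longrightarrow> P a" for n
  proof (induction n)
    case 0 then show ?case using ht_pos by fastforce
  next
    case (Suc n)
    show ?case
    proof (intro ballI impI)
      fix a assume a: "a \<in> Rp" and h: "ht a \<le> real (Suc n)"
      show "P a"
      proof (cases "\<exists>k\<in>{Suc 0..DIM('a)}. a = alpha k")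
        case True then show ?thesis using simple by auto
      next
        case False
        obtain k where k: "k \<in> {Suc 0..DIM('a)}" "0 < a \<bullet> alpha k" using exists_simple_pos[OF a] by blast
        have ne: "a \<noteq> alpha k" using False k by auto
        have b: "rrefl (alpha k) a \<in> Rp" using SR[OF k(1) a ne] .
        have "ht (rrefl (alpha k) a) = ht a - (a \<bullet> coroot (alpha k))"
          by (simp add: ht_def rrefl_def inner_diff_left alpha_rho[OF k(1)])
        moreover have "1 \<le> a \<bullet> coroot (alpha k)"
          using int_pos_ge1 integral[OF alpha_R[OF k(1)] Rp_sub[OF a]] coroot_alpha_pos[OF k] by blast
        ultimately have "ht (rrefl (alpha k) a) \<le> real n" using h by simp
        then have "P (rrefl (alpha k) a)" using Suc.IH b by blast
        then show "P a" using step a k ne by blast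
      qed
    qed
  qed
  then show ?thesis using ht_Rp[OF a0] a0 by fastforce
qed

lemma conj_refl: "k \<in> {Suc 0..DIM('a)} \<Longrightarrow> rrefl (rrefl (alpha k) b) y = rrefl (alpha k) (rrefl b (rrefl (alpha k) y))"
proof -
  assume k: "k \<in> {Suc 0..DIM('a)}"
  have o: "orth (rrefl (alpha k))" using orth_rrefl alpha_nz k by blast
  have "rrefl (rrefl (alpha k) b) (rrefl (alpha k) (rrefl (alpha k) y)) = rrefl (alpha k) (rrefl b (rrefl (alpha k) y))"
    by (rule orth_rrefl_conj[OF o])
  then show ?thesis using alpha_nz[OF k] by (simp add: rrefl_rrefl)
qed

lemma refl_word_Rp: "a \<in> Rp \<Longrightarrow> \<exists>js. set js \<subseteq> {Suc 0..DIM('a)} \<and> rrefl a = wd js"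
proof (induction rule: ht_induct)
  case (simple k) then show ?case by (intro exI[of _ "[k]"]) auto
next
  case (step a k)
  then obtain js where js: "set js \<subseteq> {Suc 0..DIM('a)}" "rrefl (rrefl (alpha k) a) = wd js" using SR[OF step(2) step(1) step(3)] by blast
  have aa: "rrefl (alpha k) (rrefl (alpha k) a) = a" using alpha_nz[OF step(2)] by (simp add: rrefl_rrefl)
  have "rrefl a = rrefl (alpha k) \<circ> rrefl (rrefl (alpha k) a) \<circ> rrefl (alpha k)"
    using conj_refl[OF step(2), of "rrefl (alpha k) a"] aa by (auto simp: fun_eq_iff)
  also have "\<dots> = wd (k # js @ [k])" using js by (simp add: wd_append comp_assoc)
  finally show ?case using js step(2) by (intro exI[of _ "k # js @ [k]"]) auto
qed

lemma refl_word: "a \<in> R \<Longrightarrow> \<exists>js. set js \<subseteq> {Suc 0..DIM('a)} \<and> rrefl a = wd js"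
  by (metis R_split UnE Rm_iff refl_word_Rp rrefl_neg minus_minus)

lemma W0_word: "w \<in> W0 R \<Longrightarrow> \<exists>js. set js \<subseteq> {Suc 0..DIM('a)} \<and> w = wd js"
proof (induction rule: W0.induct)
  case W0_id then show ?case by (intro exI[of _ "[]"]) auto
next
  case (W0_step w a)
  then obtain js where js: "set js \<subseteq> {Suc 0..DIM('a)}" "w = wd js" by blast
  obtain ks where ks: "set ks \<subseteq> {Suc 0..DIM('a)}" "rrefl a = wd ks" using refl_word W0_step by blast
  show ?case using js ks by (intro exI[of _ "ks @ js"]) (simp add: wd_append)
qed

lemma exchange:
  "set js \<subseteq> {Suc 0..DIM('a)} \<Longrightarrow> k \<in> {Suc 0..DIM('a)} \<Longrightarrow> wd js (alpha k) \<in> Rm \<Longrightarrow>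
    \<exists>js'. set js' \<subseteq> {Suc 0..DIM('a)} \<and> length js' < length js \<and> wd js' = wd js \<circ> rrefl (alpha k)"
proof (induction js)
  case Nil then show ?case using alpha_Rp Rp_not_Rm by auto
next
  case (Cons j rest)
  let ?g = "wd rest"
  have j: "j \<in> {Suc 0..DIM('a)}" and rest: "set rest \<subseteq> {Suc 0..DIM('a)}" using Cons by auto
  have gW: "?g \<in> W0 R" using wd_W0[OF rest] .
  have bR: "?g (alpha k) \<in> R" using W0_R[OF gW alpha_R[OF Cons(3)]] .
  show ?case
  proof (cases "?g (alpha k) \<in> Rm")
    case True
    then obtain rest' where r: "set rest' \<subseteq> {Suc 0..DIM('a)}" "length rest' < length rest" "wd rest' = ?g \<circ> rrefl (alpha k)"
      using Cons rest by blast
    show ?thesis using r j by (intro exI[of _ "j # rest'"]) (auto simp: comp_assoc)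
  next
    case False
    then have gp: "?g (alpha k) \<in> Rp" using bR R_split by blast
    have "rrefl (alpha j) (?g (alpha k)) \<in> Rm" using Cons(4) by simp
    then have ga: "?g (alpha k) = alpha j" using SR_neg[OF j gp] by blast
    have c: "rrefl (alpha j) (?g x) = ?g (rrefl (alpha k) x)" for x
      using orth_rrefl_conj[OF W0_orth[OF gW], of "alpha k" x] ga by simp
    have eq: "wd (j # rest) \<circ> rrefl (alpha k) = ?g"
    proof
      fix x
      have "(wd (j # rest) \<circ> rrefl (alpha k)) x = rrefl (alpha j) (?g (rrefl (alpha k) x))" by simp
      also have "\<dots> = rrefl (alpha j) (rrefl (alpha j) (?g x))" using c by simp
      also have "\<dots> = ?g x" using alpha_nz[OF j] by (simp add: rrefl_rrefl)
      finally show "(wd (j # rest) \<circ> rrefl (alpha k)) x = ?g x" .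
    qed
    show ?thesis
    proof (intro exI[of _ rest] conjI)
      show "set rest \<subseteq> {Suc 0..DIM('a)}" using rest .
      show "length rest < length (j # rest)" by simp
      show "wd rest = wd (j # rest) \<circ> rrefl (alpha k)" using eq by (rule sym)
    qed
  qed
qed

lemma not_pos_simple: "w \<in> W0 R \<Longrightarrow> \<not> (\<forall>a\<in>Rp. w a \<in> Rp) \<Longrightarrow> \<exists>k\<in>{Suc 0..DIM('a)}. w (alpha k) \<in> Rm"
  using W0_pos_simple W0_R alpha_R R_split by blast

lemma F1_word: "set js \<subseteq> {Suc 0..DIM('a)} \<Longrightarrow> (\<forall>a\<in>Rp. wd js a \<in> Rp) \<Longrightarrow> wd js = id"
proof (induction "length js" arbitrary: js rule: less_induct)
  case less
  show ?case
  proof (cases js rule: rev_cases)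
    case Nil then show ?thesis by simp
  next
    case (snoc rest k)
    have k: "k \<in> {Suc 0..DIM('a)}" and rest: "set rest \<subseteq> {Suc 0..DIM('a)}" using less.prems snoc by auto
    have wj: "wd js = wd rest \<circ> rrefl (alpha k)" using snoc by (simp add: wd_append)
    have jsW: "wd js \<in> W0 R" using wd_W0 less.prems by blast
    have "wd rest (alpha k) = wd rest (rrefl (alpha k) (rrefl (alpha k) (alpha k)))"
      using alpha_nz[OF k] by (simp add: rrefl_rrefl)
    also have "\<dots> = wd js (- alpha k)" using wj alpha_nz[OF k] by (simp add: rrefl_self)
    also have "\<dots> = - wd js (alpha k)" using W0_neg[OF jsW] by simp
    finally have "wd rest (alpha k) \<in> Rm" using less.prems(2) alpha_Rp[OF k] neg_Rp_Rm by auto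
    then obtain rest' where r: "set rest' \<subseteq> {Suc 0..DIM('a)}" "length rest' < length rest" "wd rest' = wd rest \<circ> rrefl (alpha k)"
      using exchange[OF rest k] by blast
    have "length rest' < length js" using r snoc by simp
    moreover have "wd rest' = wd js" using r wj by simp
    ultimately show ?thesis using less.hyps[of rest'] r less.prems by auto
  qed
qed

lemma F1: "w \<in> W0 R \<Longrightarrow> (\<forall>a\<in>Rp. w a \<in> Rp) \<Longrightarrow> w = id"
  using W0_word F1_word by blast

lemma F2_word: "set js \<subseteq> {Suc 0..DIM('a)} \<Longrightarrow> x \<in> dominant R alpha \<Longrightarrow> wd js x \<in> dominant R alpha \<Longrightarrow> wd js x = x"
proof (induction "length js" arbitrary: js rule: less_induct)
  case less
  let ?g = "wd js"
  have gW: "?g \<in> W0 R" using wd_W0 less.prems by blast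
  show ?case
  proof (cases "\<forall>a\<in>Rp. ?g a \<in> Rp")
    case True
    have "wd js = id" using F1_word[OF less.prems(1) True] .
    then show ?thesis by simp
  next
    case False
    then obtain k where k: "k \<in> {Suc 0..DIM('a)}" "?g (alpha k) \<in> Rm" using not_pos_simple[OF gW] by blast
    obtain js' where j': "set js' \<subseteq> {Suc 0..DIM('a)}" "length js' < length js" "wd js' = ?g \<circ> rrefl (alpha k)"
      using exchange[OF less.prems(1) k] by blast
    have x1: "0 \<le> x \<bullet> coroot (alpha k)" using less.prems(2) alpha_Rp[OF k(1)] by (simp add: dom_iff)
    have "0 \<le> ?g x \<bullet> coroot (- ?g (alpha k))" using less.prems(3) k(2) Rm_iff by (simp add: dom_iff)
    also have "?g x \<bullet> coroot (- ?g (alpha k)) = - (x \<bullet> coroot (alpha k))"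
      using W0_coroot[OF gW] W0_inner[OF gW] by (simp add: coroot_neg)
    finally have "x \<bullet> coroot (alpha k) = 0" using x1 by simp
    then have sx: "rrefl (alpha k) x = x" by (simp add: rrefl_def)
    have "wd js' x = ?g x" using j' sx by simp
    then have "wd js' x = x" using less.hyps[of js'] j' less.prems by simp
    then show ?thesis using \<open>wd js' x = ?g x\<close> by simp
  qed
qed

lemma F2: "w \<in> W0 R \<Longrightarrow> x \<in> dominant R alpha \<Longrightarrow> w x \<in> dominant R alpha \<Longrightarrow> w x = x"
  using W0_word F2_word by blast


subsection \<open>Dominant representatives\<close>

definition Neg :: "'a \<Rightarrow> 'a set" where "Neg mu = {a \<in> Rp. mu \<bullet> coroot a < 0}"

lemma finNeg: "finite (Neg mu)" using finRp by (simp add: Neg_def)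

lemma fin_inv: "finite (inv_set R alpha w)" using finRp by (simp add: inv_set_def)

lemma sk_pair: "k \<in> {Suc 0..DIM('a)} \<Longrightarrow> rrefl (alpha k) x \<bullet> coroot a = x \<bullet> coroot (rrefl (alpha k) a)"
proof -
  assume k: "k \<in> {Suc 0..DIM('a)}"
  let ?s = "rrefl (alpha k)"
  have o: "orth ?s" using orth_rrefl alpha_nz k by blast
  have "?s x \<bullet> coroot a = ?s x \<bullet> ?s (?s (coroot a))" using alpha_nz[OF k] by (simp add: rrefl_rrefl)
  also have "\<dots> = x \<bullet> ?s (coroot a)" using orth_inner[OF o] by simp
  also have "\<dots> = x \<bullet> coroot (?s a)" using orth_coroot[OF o] by simp
  finally show ?thesis .
qed

lemma EX: "mu \<in> weights R \<Longrightarrow> \<exists>w\<in>W0 R. w mu \<in> dominant R alpha \<and> inv_set R alpha w \<subseteq> Neg mu"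
proof (induction "card (Neg mu)" arbitrary: mu rule: less_induct)
  case less
  show ?case
  proof (cases "\<forall>k\<in>{Suc 0..DIM('a)}. 0 \<le> mu \<bullet> coroot (alpha k)")
    case True
    then have "mu \<in> dominant R alpha" using dom_simple less.prems by (simp add: dom_iff)
    moreover have "inv_set R alpha id = {}" using Rp_not_Rm by (auto simp: inv_set_def)
    ultimately show ?thesis by (intro bexI[of _ id]) (auto intro: W0.W0_id)
  next
    case False
    then obtain k where k: "k \<in> {Suc 0..DIM('a)}" "mu \<bullet> coroot (alpha k) < 0" by (auto simp: not_le)
    let ?s = "rrefl (alpha k)"
    let ?mu' = "?s mu"
    have sW: "?s \<in> W0 R" using rrefl_alpha_W0[OF k(1)] .
    have ws: "?mu' \<in> weights R" using W0_weights[OF sW less.prems] .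
    have ss: "?s (?s a) = a" for a using alpha_nz[OF k(1)] by (simp add: rrefl_rrefl)
    have kN: "alpha k \<in> Neg mu" using k alpha_Rp by (simp add: Neg_def)
    have sub: "Neg ?mu' \<subseteq> ?s ` (Neg mu - {alpha k})"
    proof
      fix a assume a: "a \<in> Neg ?mu'"
      then have aRp: "a \<in> Rp" and neg: "?mu' \<bullet> coroot a < 0" by (auto simp: Neg_def)
      have e: "?mu' \<bullet> coroot a = mu \<bullet> coroot (?s a)" using sk_pair[OF k(1)] .
      have ne: "a \<noteq> alpha k"
      proof
        assume "a = alpha k"
        then have "?mu' \<bullet> coroot a = - (mu \<bullet> coroot (alpha k))"
          using e alpha_nz[OF k(1)] by (simp add: rrefl_self coroot_neg)
        then show False using neg k(2) by simp
      qed
      have b: "?s a \<in> Rp" using SR[OF k(1) aRp ne] .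
      have bne: "?s a \<noteq> alpha k"
      proof
        assume "?s a = alpha k"
        then have "a = - alpha k" using ss[of a] alpha_nz[OF k(1)] by (metis rrefl_self)
        then show False using aRp alpha_Rp[OF k(1)] neg_Rp_Rm Rp_not_Rm by auto
      qed
      have "?s a \<in> Neg mu - {alpha k}" using b bne e neg by (simp add: Neg_def)
      then show "a \<in> ?s ` (Neg mu - {alpha k})" by (auto intro!: image_eqI[of _ _ "?s a"] simp: ss)
    qed
    have "card (Neg ?mu') \<le> card (?s ` (Neg mu - {alpha k}))"
      using sub finNeg by (intro card_mono) auto
    also have "\<dots> \<le> card (Neg mu - {alpha k})" by (rule card_image_le) (simp add: finNeg)
    also have "\<dots> < card (Neg mu)" by (rule card_Diff1_less[OF finNeg kN])
    finally obtain w' where w': "w' \<in> W0 R" "w' ?mu' \<in> dominant R alpha" "inv_set R alpha w' \<subseteq> Neg ?mu'"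
      using less.hyps ws by blast
    have wW: "w' \<circ> ?s \<in> W0 R" using W0_comp[OF w'(1) sW] .
    have "inv_set R alpha (w' \<circ> ?s) \<subseteq> Neg mu"
    proof
      fix a assume a: "a \<in> inv_set R alpha (w' \<circ> ?s)"
      then have aRp: "a \<in> Rp" and m: "w' (?s a) \<in> Rm" by (auto simp: inv_set_def)
      show "a \<in> Neg mu"
      proof (cases "a = alpha k")
        case True then show ?thesis using kN by simp
      next
        case False
        then have "?s a \<in> Rp" using SR[OF k(1) aRp] by blast
        then have "?s a \<in> inv_set R alpha w'" using m by (simp add: inv_set_def)
        then have "?mu' \<bullet> coroot (?s a) < 0" using w'(3) by (auto simp: Neg_def)
        then have "mu \<bullet> coroot a < 0" using sk_pair[OF k(1), of mu "?s a"] ss by simp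
        then show ?thesis using aRp by (simp add: Neg_def)
      qed
    qed
    then show ?thesis using wW w'(2) by (intro bexI[of _ "w' \<circ> ?s"]) auto
  qed
qed

lemma Neg_sub: assumes w: "w \<in> W0 R" "w mu \<in> dominant R alpha" shows "Neg mu \<subseteq> inv_set R alpha w"
proof
  fix a assume a: "a \<in> Neg mu"
  then have aRp: "a \<in> Rp" and n: "mu \<bullet> coroot a < 0" by (auto simp: Neg_def)
  have "w a \<in> R" using W0_R[OF w(1) Rp_sub[OF aRp]] .
  moreover have "w a \<notin> Rp"
  proof
    assume "w a \<in> Rp"
    then have "0 \<le> w mu \<bullet> coroot (w a)" using w(2) by (simp add: dom_iff)
    also have "w mu \<bullet> coroot (w a) = mu \<bullet> coroot a" using W0_coroot[OF w(1)] W0_inner[OF w(1)] by simp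
    finally show False using n by simp
  qed
  ultimately show "a \<in> inv_set R alpha w" using aRp R_split by (auto simp: inv_set_def)
qed

subsection \<open>The length function\<close>

lemma alcove_pos: "y \<in> alcove R alpha \<Longrightarrow> b \<in> Rp \<Longrightarrow> 0 < y \<bullet> coroot b \<and> y \<bullet> coroot b < 1"
  by (simp add: alcove_def)

lemma alcove_neg: "y \<in> alcove R alpha \<Longrightarrow> b \<in> Rm \<Longrightarrow> -1 < y \<bullet> coroot b \<and> y \<bullet> coroot b < 0"
  using alcove_pos[of y "-b"] Rm_iff by (simp add: coroot_neg)

lemma rho_coroot_pos: "a \<in> Rp \<Longrightarrow> 0 < rho_vee R alpha \<bullet> coroot a"
proof -
  assume a: "a \<in> Rp"
  have "a \<bullet> a > 0" using a Rp_sub zero_notin by auto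
  moreover have "0 < ht a" using ht_pos[OF a] by simp
  ultimately show ?thesis by (simp add: coroot_def ht_def inner_commute)
qed

lemma alcove_ne: "\<exists>x. x \<in> alcove R alpha"
proof -
  let ?S = "\<Sum>a\<in>Rp. rho_vee R alpha \<bullet> coroot a"
  have Spos: "0 \<le> ?S" using rho_coroot_pos by (intro sum_nonneg) (simp add: less_imp_le)
  define t where "t = 1 / (1 + ?S)"
  have t: "0 < t" using Spos by (simp add: t_def)
  have "t *\<^sub>R rho_vee R alpha \<in> alcove R alpha"
    unfolding alcove_def
  proof (intro CollectI ballI conjI)
    fix a assume a: "a \<in> Rp"
    have p: "0 < rho_vee R alpha \<bullet> coroot a" using rho_coroot_pos[OF a] .
    show "0 < t *\<^sub>R rho_vee R alpha \<bullet> coroot a" using p t by simp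
    have "rho_vee R alpha \<bullet> coroot a \<le> ?S"
      using finRp a rho_coroot_pos by (intro member_le_sum) (auto simp: less_imp_le)
    then have "rho_vee R alpha \<bullet> coroot a < 1 + ?S" by simp
    then show "t *\<^sub>R rho_vee R alpha \<bullet> coroot a < 1"
      using Spos by (simp add: t_def field_simps)
  qed
  then show ?thesis by blast
qed

lemma sign_lemma:
  fixes g h :: real and k d :: int
  assumes g: "0 < g" "g < 1" and h: "of_int d < h" "h < of_int d + 1"
  shows "(g - of_int k) * (h - of_int k) < 0 \<longleftrightarrow> (1 \<le> k \<and> k \<le> d) \<or> (d + 1 \<le> k \<and> k \<le> 0)"
proof
  assume "(g - of_int k) * (h - of_int k) < 0"
  then have "(g < of_int k \<and> of_int k < h) \<or> (of_int k < g \<and> h < of_int k)"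
    by (auto simp: mult_less_0_iff)
  then show "(1 \<le> k \<and> k \<le> d) \<or> (d + 1 \<le> k \<and> k \<le> 0)"
  proof
    assume a: "g < of_int k \<and> of_int k < h"
    then have "0 < k" using g by linarith
    moreover have "k < d + 1" using a h by linarith
    ultimately show ?thesis by simp
  next
    assume a: "of_int k < g \<and> h < of_int k"
    then have "k < 1" using g by linarith
    moreover have "d < k" using a h by linarith
    ultimately show ?thesis by simp
  qed
next
  assume "(1 \<le> k \<and> k \<le> d) \<or> (d + 1 \<le> k \<and> k \<le> 0)"
  then show "(g - of_int k) * (h - of_int k) < 0"
  proof
    assume a: "1 \<le> k \<and> k \<le> d"
    then have "g - of_int k < 0" "0 < h - of_int k" using g h by linarith+
    then show ?thesis by (simp add: mult_less_0_iff)
  next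
    assume a: "d + 1 \<le> k \<and> k \<le> 0"
    then have "0 < g - of_int k" "h - of_int k < 0" using g h by linarith+
    then show ?thesis by (simp add: mult_less_0_iff)
  qed
qed

lemma Kset:
  fixes g h :: "'b \<Rightarrow> real" and d :: int
  assumes A: "A \<noteq> {}" and g: "\<forall>x\<in>A. 0 < g x \<and> g x < 1" and h: "\<forall>y\<in>A. of_int d < h y \<and> h y < of_int d + 1"
  shows "{k::int. \<exists>x\<in>A. \<exists>y\<in>A. (g x - of_int k) * (h y - of_int k) < 0} = {k. 1 \<le> k \<and> k \<le> d} \<union> {k. d + 1 \<le> k \<and> k \<le> 0}"
proof -
  obtain x0 where x0: "x0 \<in> A" using A by blast
  show ?thesis
  proof (intro set_eqI iffI)
    fix k assume "k \<in> {k::int. \<exists>x\<in>A. \<exists>y\<in>A. (g x - of_int k) * (h y - of_int k) < 0}"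
    then obtain x y where "x \<in> A" "y \<in> A" "(g x - of_int k) * (h y - of_int k) < 0" by blast
    then show "k \<in> {k. 1 \<le> k \<and> k \<le> d} \<union> {k. d + 1 \<le> k \<and> k \<le> 0}"
      using sign_lemma[of "g x" d "h y" k] g h by auto
  next
    fix k assume "k \<in> {k. 1 \<le> k \<and> k \<le> d} \<union> {k. d + 1 \<le> k \<and> k \<le> 0}"
    then have "(g x0 - of_int k) * (h x0 - of_int k) < 0"
      using sign_lemma[of "g x0" d "h x0" k] g h x0 by auto
    then show "k \<in> {k::int. \<exists>x\<in>A. \<exists>y\<in>A. (g x - of_int k) * (h y - of_int k) < 0}" using x0 by blast
  qed
qed

lemma card_K: "card ({k::int. 1 \<le> k \<and> k \<le> d} \<union> {k. d + 1 \<le> k \<and> k \<le> 0}) = nat \<bar>d\<bar>"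
proof (cases "0 \<le> d")
  case True
  then have "{k::int. 1 \<le> k \<and> k \<le> d} \<union> {k. d + 1 \<le> k \<and> k \<le> 0} = {1..d}" by auto
  then show ?thesis using True by simp
next
  case False
  then have "{k::int. 1 \<le> k \<and> k \<le> d} \<union> {k. d + 1 \<le> k \<and> k \<le> 0} = {d+1..0}" by auto
  then show ?thesis using False by simp
qed

lemma fin_K: "finite ({k::int. 1 \<le> k \<and> k \<le> d} \<union> {k. d + 1 \<le> k \<and> k \<le> 0})"
proof -
  have "{k::int. 1 \<le> k \<and> k \<le> d} \<union> {k. d + 1 \<le> k \<and> k \<le> 0} \<subseteq> {d+1..d} \<union> {d+1..0} \<union> {1..d}" by auto
  then show ?thesis by (rule finite_subset) simp
qed

lemma LF:
  assumes v: "v \<in> W0 R" and v': "v' \<in> W0 R" "\<forall>z. v (v' z) = z" and m: "m \<in> weights R"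
  shows "len R alpha (\<lambda>x. v x + m) = (\<Sum>a\<in>Rp. nat \<bar>\<lfloor>m \<bullet> coroot a\<rfloor> - (if v' a \<in> Rm then 1 else 0)\<bar>)"
proof -
  let ?A = "alcove R alpha"
  define d where "d a = \<lfloor>m \<bullet> coroot a\<rfloor> - (if v' a \<in> Rm then 1 else 0)" for a
  define K where "K a = {k::int. \<exists>x\<in>?A. \<exists>y\<in>?A. (x \<bullet> coroot a - of_int k) * ((v y + m) \<bullet> coroot a - of_int k) < 0}" for a
  have set: "{(a, k). a \<in> Rp \<and> (\<exists>x\<in>?A. \<exists>y\<in>?A. (x \<bullet> coroot a - of_int k) * ((v y + m) \<bullet> coroot a - of_int k) < 0)} = Sigma Rp K"
    unfolding K_def by (auto; blast)
  have Ane: "?A \<noteq> {}" using alcove_ne by blast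
  have each: "K a = {k. 1 \<le> k \<and> k \<le> d a} \<union> {k. d a + 1 \<le> k \<and> k \<le> 0}" if a: "a \<in> Rp" for a
  proof -
    have aR: "a \<in> R" using Rp_sub[OF a] .
    have mi: "m \<bullet> coroot a = of_int \<lfloor>m \<bullet> coroot a\<rfloor>" using weights_int[OF m aR] by (simp add: Ints_def)
    have vR: "v' a \<in> R" using W0_R[OF v'(1) aR] .
    have hv: "(v y + m) \<bullet> coroot a = y \<bullet> coroot (v' a) + of_int \<lfloor>m \<bullet> coroot a\<rfloor>" for y
    proof -
      have "v y \<bullet> coroot a = v y \<bullet> v (v' (coroot a))" using v'(2) by simp
      also have "\<dots> = y \<bullet> v' (coroot a)" using W0_inner[OF v] by simp
      also have "\<dots> = y \<bullet> coroot (v' a)" using W0_coroot[OF v'(1)] by simp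
      finally show ?thesis using mi by (simp add: inner_add_left)
    qed
    have h: "\<forall>y\<in>?A. of_int (d a) < (v y + m) \<bullet> coroot a \<and> (v y + m) \<bullet> coroot a < of_int (d a) + 1"
    proof
      fix y assume y: "y \<in> ?A"
      show "of_int (d a) < (v y + m) \<bullet> coroot a \<and> (v y + m) \<bullet> coroot a < of_int (d a) + 1"
      proof (cases "v' a \<in> Rm")
        case True
        then show ?thesis using alcove_neg[OF y True] hv[of y] by (simp add: d_def)
      next
        case False
        then have "v' a \<in> Rp" using vR R_split by blast
        then show ?thesis using alcove_pos[OF y] False hv[of y] by (simp add: d_def)
      qed
    qed
    have g: "\<forall>x\<in>?A. 0 < x \<bullet> coroot a \<and> x \<bullet> coroot a < 1" using alcove_pos a by blast
    show ?thesis unfolding K_def using Kset[OF Ane g h] .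
  qed
  have "len R alpha (\<lambda>x. v x + m) = card (Sigma Rp K)"
    unfolding len_def using set by simp
  also have "\<dots> = (\<Sum>a\<in>Rp. card (K a))"
    using finRp each fin_K by (intro card_SigmaI) auto
  also have "\<dots> = (\<Sum>a\<in>Rp. nat \<bar>d a\<bar>)"
    using each card_K by (intro sum.cong) auto
  finally show ?thesis by (simp add: d_def)
qed

lemma len_W0: assumes w: "w \<in> W0 R" shows "len R alpha w = card (inv_set R alpha w)"
proof -
  let ?w' = "winv w"
  have ww: "w = (\<lambda>x. w x + 0)" by simp
  have "len R alpha w = (\<Sum>a\<in>Rp. nat \<bar>\<lfloor>0 \<bullet> coroot a\<rfloor> - (if ?w' a \<in> Rm then 1 else 0)\<bar>)"
    using LF[OF w winv_W0[OF w] _ , of 0] winv_r[OF w] R_weights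
    by (subst ww) (simp add: weights_def)
  also have "\<dots> = (\<Sum>a\<in>Rp. of_bool (?w' a \<in> Rm))"
    by (intro sum.cong) auto
  also have "\<dots> = card (Rp \<inter> {a. ?w' a \<in> Rm})" using finRp by simp
  also have "\<dots> = card (inv_set R alpha w)"
  proof (rule bij_betw_same_card[symmetric])
    show "bij_betw (\<lambda>b. - w b) (inv_set R alpha w) (Rp \<inter> {a. ?w' a \<in> Rm})"
    proof (rule bij_betw_byWitness[where f' = "\<lambda>a. - ?w' a"])
      show "\<forall>b\<in>inv_set R alpha w. - ?w' (- w b) = b"
        using winv_l[OF w] W0_neg[OF winv_W0[OF w]] by simp
      show "\<forall>a\<in>Rp \<inter> {a. ?w' a \<in> Rm}. - w (- ?w' a) = a"
        using winv_r[OF w] W0_neg[OF w] by simp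
      show "(\<lambda>b. - w b) ` inv_set R alpha w \<subseteq> Rp \<inter> {a. ?w' a \<in> Rm}"
        using winv_l[OF w] W0_neg[OF winv_W0[OF w]]
        by (auto simp: inv_set_def Rm_iff)
      show "(\<lambda>a. - ?w' a) ` (Rp \<inter> {a. ?w' a \<in> Rm}) \<subseteq> inv_set R alpha w"
        using winv_r[OF w] W0_neg[OF w]
        by (auto simp: inv_set_def Rm_iff)
    qed
  qed
  finally show ?thesis .
qed


lemma WM:
  assumes w: "w \<in> W0 R" "w mu \<in> dominant R alpha" "inv_set R alpha w \<subseteq> Neg mu"
  shows "wmin R alpha mu = w \<and> inv_set R alpha w = Neg mu"
proof -
  have N: "inv_set R alpha w = Neg mu" using w Neg_sub by blast
  have lw: "len R alpha w = card (Neg mu)" using len_W0[OF w(1)] N by simp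
  have minimal: "\<forall>v\<in>W0 R. v mu \<in> dominant R alpha \<longrightarrow> len R alpha w \<le> len R alpha v"
  proof (intro ballI impI)
    fix v assume v: "v \<in> W0 R" "v mu \<in> dominant R alpha"
    have "card (Neg mu) \<le> card (inv_set R alpha v)" using card_mono[OF fin_inv Neg_sub[OF v]] .
    then show "len R alpha w \<le> len R alpha v" using lw len_W0[OF v(1)] by simp
  qed
  have "wmin R alpha mu = w"
    unfolding wmin_def
  proof (rule the_equality)
    show "w \<in> W0 R \<and> w mu \<in> dominant R alpha \<and> (\<forall>v\<in>W0 R. v mu \<in> dominant R alpha \<longrightarrow> len R alpha w \<le> len R alpha v)"
      using w minimal by blast
  next
    fix w2 assume w2: "w2 \<in> W0 R \<and> w2 mu \<in> dominant R alpha \<and> (\<forall>v\<in>W0 R. v mu \<in> dominant R alpha \<longrightarrow> len R alpha w2 \<le> len R alpha v)"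
    then have w2W: "w2 \<in> W0 R" and w2d: "w2 mu \<in> dominant R alpha" and le: "len R alpha w2 \<le> len R alpha w"
      using w by auto
    have sub: "Neg mu \<subseteq> inv_set R alpha w2" using Neg_sub[OF w2W w2d] .
    have "card (inv_set R alpha w2) \<le> card (Neg mu)" using le lw len_W0[OF w2W] by simp
    then have N2: "inv_set R alpha w2 = Neg mu" using card_seteq[OF fin_inv sub] by simp
    define u where "u = w2 \<circ> winv w"
    have uW: "u \<in> W0 R" unfolding u_def using W0_comp[OF w2W winv_W0[OF w(1)]] .
    have "\<forall>b\<in>Rp. u b \<in> Rp"
    proof
      fix b assume b: "b \<in> Rp"
      let ?a = "winv w b"
      have aR: "?a \<in> R" using W0_R[OF winv_W0[OF w(1)] Rp_sub[OF b]] .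
      have wa: "w ?a = b" using winv_r[OF w(1)] .
      show "u b \<in> Rp"
      proof (cases "?a \<in> Rp")
        case True
        then have "?a \<notin> inv_set R alpha w" using wa b Rp_not_Rm by (simp add: inv_set_def)
        then have "?a \<notin> inv_set R alpha w2" using N N2 by simp
        then have "w2 ?a \<notin> Rm" using True by (simp add: inv_set_def)
        moreover have "w2 ?a \<in> R" using W0_R[OF w2W aR] .
        ultimately show ?thesis using R_split u_def by auto
      next
        case False
        then have na: "-?a \<in> Rp" using aR R_split Rm_iff by blast
        have "w (-?a) = -b" using W0_neg[OF w(1)] wa by simp
        then have "-?a \<in> inv_set R alpha w" using na b neg_Rp_Rm by (simp add: inv_set_def)
        then have "-?a \<in> inv_set R alpha w2" using N N2 by simp
        then have "w2 (-?a) \<in> Rm" by (simp add: inv_set_def)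
        then have "- w2 ?a \<in> Rm" using W0_neg[OF w2W] by simp
        then show "u b \<in> Rp" using Rm_iff u_def by simp
      qed
    qed
    then have "u = id" using F1 uW by blast
    show "w2 = w"
    proof
      fix x
      have "w2 x = u (w x)" using winv_l[OF w(1)] by (simp add: u_def)
      then show "w2 x = w x" using \<open>u = id\<close> by simp
    qed
  qed
  then show ?thesis using N by simp
qed

lemma G:
  assumes w: "w \<in> W0 R"
  shows "(w x - x) \<bullet> rho_vee R alpha = - (\<Sum>b\<in>inv_set R alpha w. x \<bullet> coroot b)"
proof -
  let ?w' = "winv w"
  let ?N = "inv_set R alpha w"
  define g where "g b = x \<bullet> coroot b" for b
  have w'W: "?w' \<in> W0 R" using winv_W0[OF w] .
  let ?P = "Rp \<inter> {a. ?w' a \<in> Rp}"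
  let ?Q = "Rp - {a. ?w' a \<in> Rp}"
  have NRp: "?N \<subseteq> Rp" by (auto simp: inv_set_def)
  have s1: "(\<Sum>a\<in>Rp. g (?w' a)) = (\<Sum>a\<in>?P. g (?w' a)) + (\<Sum>a\<in>?Q. g (?w' a))"
    by (rule sum.Int_Diff[OF finRp])
  have s2: "(\<Sum>a\<in>?P. g (?w' a)) = (\<Sum>b\<in>Rp - ?N. g b)"
  proof (rule sum.reindex_bij_witness[of _ w ?w'])
    fix a assume a: "a \<in> ?P"
    show "w (?w' a) = a" using winv_r[OF w] .
    show "?w' a \<in> Rp - ?N" using a winv_r[OF w] Rp_not_Rm by (auto simp: inv_set_def)
    show "g (?w' a) = g (?w' a)" ..
  next
    fix b assume b: "b \<in> Rp - ?N"
    show "?w' (w b) = b" using winv_l[OF w] .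
    have "w b \<in> R" using W0_R[OF w] b Rp_sub by blast
    then have "w b \<in> Rp" using b R_split by (auto simp: inv_set_def)
    then show "w b \<in> ?P" using winv_l[OF w] b by simp
  qed
  have s3: "(\<Sum>a\<in>?Q. g (?w' a)) = (\<Sum>b\<in>?N. - g b)"
  proof (rule sum.reindex_bij_witness[of _ "\<lambda>b. - w b" "\<lambda>a. - ?w' a"])
    fix a assume a: "a \<in> ?Q"
    show "- w (- ?w' a) = a" using winv_r[OF w] W0_neg[OF w] by simp
    have "?w' a \<in> R" using W0_R[OF w'W] a Rp_sub by blast
    then have m: "?w' a \<in> Rm" using a R_split by auto
    show "- ?w' a \<in> ?N" using m winv_r[OF w] W0_neg[OF w] a neg_Rp_Rm
      by (simp add: inv_set_def Rm_iff)
    show "- g (- ?w' a) = g (?w' a)" by (simp add: g_def coroot_neg)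
  next
    fix b assume b: "b \<in> ?N"
    show "- ?w' (- w b) = b" using winv_l[OF w] W0_neg[OF w'W] by simp
    have "- w b \<in> Rp" using b by (simp add: inv_set_def Rm_iff)
    moreover have "?w' (- w b) \<notin> Rp" using winv_l[OF w] W0_neg[OF w'W] b neg_Rp_Rm Rp_not_Rm
      by (auto simp: inv_set_def)
    ultimately show "- w b \<in> ?Q" by simp
  qed
  have s4: "(\<Sum>b\<in>Rp - ?N. g b) = (\<Sum>b\<in>Rp. g b) - (\<Sum>b\<in>?N. g b)" by (rule sum_diff[OF finRp NRp])
  have lw': "linear ?w'" using W0_orth[OF w'W] orth_linear by blast
  have rw: "?w' (rho_vee R alpha) = (1/2) *\<^sub>R (\<Sum>a\<in>Rp. coroot (?w' a))"
    unfolding rho_vee_def using W0_coroot[OF w'W]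
    by (simp add: linear_scale[OF lw'] linear_sum[OF lw'])
  have "w x \<bullet> rho_vee R alpha = x \<bullet> ?w' (rho_vee R alpha)" using W0_shift[OF w] .
  also have "\<dots> = (1/2) * (\<Sum>a\<in>Rp. g (?w' a))" unfolding rw by (simp add: g_def inner_sum_right)
  finally have A: "w x \<bullet> rho_vee R alpha = (1/2) * ((\<Sum>b\<in>Rp. g b) - 2 * (\<Sum>b\<in>?N. g b))"
    using s1 s2 s3 s4 by (simp add: sum_negf)
  have B: "x \<bullet> rho_vee R alpha = (1/2) * (\<Sum>b\<in>Rp. g b)"
    unfolding rho_vee_def by (simp add: g_def inner_sum_right)
  show ?thesis using A B by (simp add: inner_diff_left g_def algebra_simps)
qed

lemma theta_formula:
  assumes w: "w \<in> W0 R" "w mu \<in> dominant R alpha" "inv_set R alpha w \<subseteq> Neg mu"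
  shows "theta R alpha mu = (\<Sum>b\<in>inv_set R alpha w. - (mu \<bullet> coroot b) - 1)"
proof -
  have wm: "wmin R alpha mu = w" using WM[OF w] by blast
  have "theta R alpha mu = (w mu - mu) \<bullet> rho_vee R alpha - real (card (inv_set R alpha w))"
    unfolding theta_def dom_rep_def wm using len_W0[OF w(1)] by simp
  also have "\<dots> = (\<Sum>b\<in>inv_set R alpha w. - (mu \<bullet> coroot b) - 1)"
    using G[OF w(1)] by (simp add: sum_subtractf sum_negf)
  finally show ?thesis .
qed


subsection \<open>Pairs of roots\<close>

lemma nonparallel:
  assumes a: "a \<in> R" and b: "b \<in> R" and ab: "0 < a \<bullet> b" and ne: "a \<noteq> b"
  shows "(a \<bullet> b)\<^sup>2 < (a \<bullet> a) * (b \<bullet> b)"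
proof -
  have na: "norm a > 0" using nz[OF a] by simp
  have nb: "norm b > 0" using nz[OF b] by simp
  have le: "\<bar>a \<bullet> b\<bar> \<le> norm a * norm b" by (rule Cauchy_Schwarz_ineq2)
  have "\<bar>a \<bullet> b\<bar> \<noteq> norm a * norm b"
  proof
    assume "\<bar>a \<bullet> b\<bar> = norm a * norm b"
    then have "norm a *\<^sub>R b = norm b *\<^sub>R a \<or> norm a *\<^sub>R b = - norm b *\<^sub>R a"
      using norm_cauchy_schwarz_abs_eq by blast
    then obtain c where c: "b = c *\<^sub>R a"
    proof
      assume h: "norm a *\<^sub>R b = norm b *\<^sub>R a"
      have "b = (1 / norm a) *\<^sub>R (norm a *\<^sub>R b)" using na by simp
      also have "\<dots> = (norm b / norm a) *\<^sub>R a" using h by simp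
      finally show ?thesis by (rule that)
    next
      assume h: "norm a *\<^sub>R b = - norm b *\<^sub>R a"
      have "b = (1 / norm a) *\<^sub>R (norm a *\<^sub>R b)" using na by simp
      also have "\<dots> = (- norm b / norm a) *\<^sub>R a" using h by simp
      finally show ?thesis by (rule that)
    qed
    then have "c = 1 \<or> c = -1" using reduced[OF a] b by blast
    then show False
    proof
      assume "c = 1" then show False using c ne by simp
    next
      assume "c = -1" then have "a \<bullet> b = - (a \<bullet> a)" using c by simp
      then show False using ab inner_ge_zero[of a] by linarith
    qed
  qed
  then have "\<bar>a \<bullet> b\<bar> < norm a * norm b" using le by simp
  then have "\<bar>a \<bullet> b\<bar>\<^sup>2 < (norm a * norm b)\<^sup>2" by (rule power_strict_mono) auto
  then show ?thesis by (simp add: power_mult_distrib power2_norm_eq_inner)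
qed

lemma real_int_cases: "(x::real) \<in> \<int> \<Longrightarrow> (\<And>z. x = of_int z \<Longrightarrow> P) \<Longrightarrow> P"
  by (metis Ints_cases)

lemma PR:
  assumes a: "a \<in> R" and b: "b \<in> R" and ab: "0 < a \<bullet> b" and ne: "a \<noteq> b"
  shows "a \<bullet> coroot b = 1 \<or> b \<bullet> coroot a = 1"
proof -
  let ?p = "a \<bullet> coroot b" and ?q = "b \<bullet> coroot a"
  have aa: "a \<bullet> a > 0" using nz[OF a] by simp
  have bb: "b \<bullet> b > 0" using nz[OF b] by simp
  have p: "?p = 2 * (a \<bullet> b) / (b \<bullet> b)" by (simp add: coroot_def)
  have q: "?q = 2 * (a \<bullet> b) / (a \<bullet> a)" by (simp add: coroot_def inner_commute)
  have "?p * ?q = 4 * (a \<bullet> b)\<^sup>2 / ((a \<bullet> a) * (b \<bullet> b))" unfolding p q by (simp add: power2_eq_square field_simps)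
  also have "\<dots> < 4" using nonparallel[OF assms] aa bb by (simp add: field_simps)
  finally have pq: "?p * ?q < 4" .
  have pp: "0 < ?p" using p ab bb by simp
  have qp: "0 < ?q" using q ab aa by simp
  obtain P where P: "?p = of_int P" using integral[OF b a] real_int_cases by blast
  obtain Q where Q: "?q = of_int Q" using integral[OF a b] real_int_cases by blast
  have P1: "1 \<le> P" using pp P by simp
  have Q1: "1 \<le> Q" using qp Q by simp
  have "P * Q < 4" using pq P Q by (metis of_int_less_iff of_int_mult of_int_numeral)
  then have "P = 1 \<or> Q = 1"
  proof -
    assume pq4: "P * Q < 4"
    have "\<not> (2 \<le> P \<and> 2 \<le> Q)"
    proof
      assume "2 \<le> P \<and> 2 \<le> Q"
      then have "2 * 2 \<le> P * Q" by (intro mult_mono) auto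
      then show False using pq4 by simp
    qed
    then show ?thesis using P1 Q1 by auto
  qed
  then show ?thesis using P Q by auto
qed

lemma diff_root:
  assumes a: "a \<in> R" and b: "b \<in> R" and ab: "0 < a \<bullet> b" and ne: "a \<noteq> b"
  shows "a - b \<in> R"
  using PR[OF assms]
proof
  assume "a \<bullet> coroot b = 1"
  then have "rrefl b a = a - b" by (simp add: rrefl_def)
  then show ?thesis using refl_closed[OF b a] by simp
next
  assume "b \<bullet> coroot a = 1"
  then have "rrefl a b = b - a" by (simp add: rrefl_def)
  then show ?thesis using refl_closed[OF a b] neg_root by fastforce
qed

lemma diff_coroot:
  assumes a: "a \<in> R" and b: "b \<in> R" and ab: "0 < a \<bullet> b" and ne: "a \<noteq> b"
  shows "\<exists>e\<in>R. coroot a - coroot b = coroot e"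
  using PR[OF assms]
proof
  assume p: "a \<bullet> coroot b = 1"
  have "coroot (rrefl a b) = rrefl a (coroot b)" using orth_coroot[OF orth_rrefl[OF nz[OF a]]] by simp
  also have "\<dots> = coroot b - (coroot b \<bullet> coroot a) *\<^sub>R a" by (simp add: rrefl_def)
  also have "(coroot b \<bullet> coroot a) *\<^sub>R a = (coroot b \<bullet> a) *\<^sub>R coroot a" by (rule inner_coroot_swap)
  also have "coroot b \<bullet> a = 1" using p by (simp add: inner_commute)
  finally have "coroot a - coroot b = coroot (- rrefl a b)" by (simp add: coroot_neg)
  then show ?thesis using refl_closed[OF a b] neg_root by blast
next
  assume q: "b \<bullet> coroot a = 1"
  have "coroot (rrefl b a) = rrefl b (coroot a)" using orth_coroot[OF orth_rrefl[OF nz[OF b]]] by simp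
  also have "\<dots> = coroot a - (coroot a \<bullet> coroot b) *\<^sub>R b" by (simp add: rrefl_def)
  also have "(coroot a \<bullet> coroot b) *\<^sub>R b = (coroot a \<bullet> b) *\<^sub>R coroot b" by (rule inner_coroot_swap)
  also have "coroot a \<bullet> b = 1" using q by (simp add: inner_commute)
  finally have "coroot a - coroot b = coroot (rrefl b a)" by simp
  then show ?thesis using refl_closed[OF b a] by blast
qed

lemma simple_nonacute:
  assumes i: "i \<in> {Suc 0..DIM('a)}" and j: "j \<in> {Suc 0..DIM('a)}" and ne: "i \<noteq> j"
  shows "alpha i \<bullet> alpha j \<le> 0"
proof (rule ccontr)
  assume "\<not> ?thesis"
  then have pos: "0 < alpha i \<bullet> alpha j" by simp
  have ne': "alpha i \<noteq> alpha j" using alpha_inj i j ne by (auto dest: inj_onD)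
  have dR: "alpha i - alpha j \<in> R" using diff_root[OF alpha_R[OF i] alpha_R[OF j] pos ne'] .
  define e where "e l = (if l = i then 1 else 0) - (if l = j then 1 else (0::real))" for l
  have de: "alpha i - alpha j = (\<Sum>l\<in>{Suc 0..DIM('a)}. e l *\<^sub>R alpha l)"
    unfolding e_def scaleR_diff_left sum_subtractf using sum_delta_alpha[OF i] sum_delta_alpha[OF j] by simp
  show False
  proof (cases "alpha i - alpha j \<in> Rp")
    case True
    then obtain r where r: "\<forall>l. 0 \<le> r l" "alpha i - alpha j = (\<Sum>l\<in>{Suc 0..DIM('a)}. r l *\<^sub>R alpha l)"
      using Rp_C[OF True] unfolding C_def by blast
    have "r j = e j" using coeff_eq[of r e j] r(2) de j by simp
    then show False using r(1)[rule_format, of j] ne by (simp add: e_def)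
  next
    case False
    then have "alpha j - alpha i \<in> Rp" using dR R_split Rm_iff by fastforce
    then obtain r where r: "\<forall>l. 0 \<le> r l" "alpha j - alpha i = (\<Sum>l\<in>{Suc 0..DIM('a)}. r l *\<^sub>R alpha l)"
      using Rp_C[OF \<open>alpha j - alpha i \<in> Rp\<close>] unfolding C_def by blast
    have "alpha j - alpha i = (\<Sum>l\<in>{Suc 0..DIM('a)}. (- e l) *\<^sub>R alpha l)"
      using arg_cong[OF de, of uminus] by (simp add: sum_negf)
    then have "r i = - e i" using coeff_eq[of r "\<lambda>l. - e l" i] r(2) i by simp
    then show False using r(1)[rule_format, of i] ne by (simp add: e_def)
  qed
qed


subsection \<open>The highest coroot\<close>

definition ht2 :: "'a \<Rightarrow> real" where "ht2 a = coroot a \<bullet> rho_vee R alpha"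

lemma C_rho_pos: assumes x: "x \<in> C" "x \<noteq> 0" shows "0 < x \<bullet> rho_vee R alpha"
proof -
  obtain r where r: "\<forall>j. 0 \<le> r j" "x = (\<Sum>j\<in>{Suc 0..DIM('a)}. r j *\<^sub>R alpha j)" using x(1) C_def by auto
  have e: "x \<bullet> rho_vee R alpha = (\<Sum>j\<in>{Suc 0..DIM('a)}. r j)"
    using r(2) alpha_rho by (simp add: inner_sum_left)
  have nn: "0 \<le> (\<Sum>j\<in>{Suc 0..DIM('a)}. r j)" using r(1) by (simp add: sum_nonneg)
  have "(\<Sum>j\<in>{Suc 0..DIM('a)}. r j) \<noteq> 0"
  proof
    assume "(\<Sum>j\<in>{Suc 0..DIM('a)}. r j) = 0"
    then have "\<forall>j\<in>{Suc 0..DIM('a)}. r j = 0" using r(1) sum_nonneg_eq_0_iff[of "{Suc 0..DIM('a)}" r] by auto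
    then show False using r(2) x(2) by simp
  qed
  then show ?thesis using e nn by simp
qed

lemma C_diff_ht2: "coroot b - coroot a \<in> C \<Longrightarrow> coroot b \<noteq> coroot a \<Longrightarrow> ht2 a < ht2 b"
  using C_rho_pos[of "coroot b - coroot a"] by (simp add: ht2_def inner_diff_left)

lemma refl_coroot: "k \<in> {Suc 0..DIM('a)} \<Longrightarrow> coroot (rrefl (alpha k) c) = coroot c - (alpha k \<bullet> coroot c) *\<^sub>R coroot (alpha k)"
proof -
  assume k: "k \<in> {Suc 0..DIM('a)}"
  have "coroot (rrefl (alpha k) c) = rrefl (alpha k) (coroot c)"
    using orth_coroot[OF orth_rrefl[OF alpha_nz[OF k]]] by simp
  also have "\<dots> = coroot c - (coroot c \<bullet> coroot (alpha k)) *\<^sub>R alpha k" by (simp add: rrefl_def)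
  also have "(coroot c \<bullet> coroot (alpha k)) *\<^sub>R alpha k = (coroot c \<bullet> alpha k) *\<^sub>R coroot (alpha k)"
    by (rule inner_coroot_swap)
  finally show ?thesis by (simp add: inner_commute)
qed

lemma raise:
  assumes c: "c \<in> Rp" and k: "k \<in> {Suc 0..DIM('a)}" and neg: "c \<bullet> alpha k < 0"
  shows "rrefl (alpha k) c \<in> Rp \<and> coroot (rrefl (alpha k) c) - coroot c \<in> C \<and> coroot (rrefl (alpha k) c) \<noteq> coroot c"
proof -
  let ?t = "- (alpha k \<bullet> coroot c)"
  have cc: "c \<bullet> c > 0" using c Rp_sub zero_notin by auto
  have t: "0 < ?t"
  proof -
    have "alpha k \<bullet> coroot c = 2 * (c \<bullet> alpha k) / (c \<bullet> c)" by (simp add: coroot_def inner_commute)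
    moreover have "2 * (c \<bullet> alpha k) / (c \<bullet> c) < 0" using neg cc by (simp add: divide_neg_pos)
    ultimately show ?thesis by simp
  qed
  have e: "coroot (rrefl (alpha k) c) - coroot c = ?t *\<^sub>R coroot (alpha k)"
    using refl_coroot[OF k, of c] by simp
  have d: "?t *\<^sub>R coroot (alpha k) \<in> C" using t C_alpha[OF k] by (intro C_scale) (auto simp: coroot_C)
  have nz': "?t *\<^sub>R coroot (alpha k) \<noteq> 0" using t coroot_nz[OF alpha_nz[OF k]] by simp
  have eq: "coroot (rrefl (alpha k) c) = coroot c + ?t *\<^sub>R coroot (alpha k)"
    using refl_coroot[OF k, of c] by simp
  have "coroot c + ?t *\<^sub>R coroot (alpha k) \<in> C" using C_add[OF iffD2[OF coroot_C Rp_C[OF c]] d] .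
  then have "coroot (rrefl (alpha k) c) \<in> C" using eq by metis
  then have "rrefl (alpha k) c \<in> Rp"
    using root_C coroot_C refl_closed[OF alpha_R[OF k] Rp_sub[OF c]] by blast
  moreover have "coroot (rrefl (alpha k) c) \<noteq> coroot c"
  proof
    assume "coroot (rrefl (alpha k) c) = coroot c"
    then have "?t *\<^sub>R coroot (alpha k) = 0" using e by simp
    then show False using nz' by simp
  qed
  ultimately show ?thesis using e d by simp
qed

lemma ex_max: "finite S \<Longrightarrow> S \<noteq> {} \<Longrightarrow> \<exists>c\<in>S. \<forall>b\<in>S. f b \<le> (f c :: real)"
proof -
  assume S: "finite S" "S \<noteq> {}"
  have "Max (f ` S) \<in> f ` S" using S by (intro Max_in) auto
  then obtain c where c: "c \<in> S" "f c = Max (f ` S)" by auto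
  then show ?thesis using S by (metis Max_ge finite_imageI imageI)
qed

lemma sum_delta_gen: "k \<in> {Suc 0..DIM('a)} \<Longrightarrow> (\<Sum>j\<in>{Suc 0..DIM('a)}. (if j = k then t else 0) *\<^sub>R f j) = t *\<^sub>R (f k :: 'a)"
  by (subst sum.cong[OF refl, of _ _ "\<lambda>j. if j = k then t *\<^sub>R f k else 0"]) auto

lemma coroot_int_Rp: "a \<in> Rp \<Longrightarrow> \<exists>z::nat\<Rightarrow>int. coroot a = (\<Sum>j\<in>{Suc 0..DIM('a)}. of_int (z j) *\<^sub>R coroot (alpha j))"
proof (induction rule: ht_induct)
  case (simple k)
  show ?case
    by (rule exI[of _ "\<lambda>j. if j = k then 1 else 0"])
       (simp add: sum_delta_gen[OF simple, of 1 "\<lambda>j. coroot (alpha j)", simplified] if_distrib[of of_int] cong: if_cong)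
next
  case (step a k)
  let ?b = "rrefl (alpha k) a"
  obtain z where z: "coroot ?b = (\<Sum>j\<in>{Suc 0..DIM('a)}. of_int (z j) *\<^sub>R coroot (alpha j))" using step by blast
  have ba: "rrefl (alpha k) ?b = a" using alpha_nz[OF step(2)] by (simp add: rrefl_rrefl)
  obtain t where t: "alpha k \<bullet> coroot ?b = of_int t"
    using integral[OF refl_closed[OF alpha_R[OF step(2)] Rp_sub[OF step(1)]] alpha_R[OF step(2)]] real_int_cases by blast
  have "coroot a = coroot ?b - (alpha k \<bullet> coroot ?b) *\<^sub>R coroot (alpha k)"
    using refl_coroot[OF step(2), of ?b] ba by simp
  also have "\<dots> = (\<Sum>j\<in>{Suc 0..DIM('a)}. of_int (z j - (if j = k then t else 0)) *\<^sub>R coroot (alpha j))"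
    using z t sum_delta_gen[OF step(2), of "of_int t" "\<lambda>j. coroot (alpha j)"]
    by (simp add: scaleR_diff_left sum_subtractf if_distrib[of of_int] cong: if_cong)
  finally show ?case by (intro exI[of _ "\<lambda>j. z j - (if j = k then t else 0)"])
qed

lemma coroot_int: "a \<in> R \<Longrightarrow> \<exists>z::nat\<Rightarrow>int. coroot a = (\<Sum>j\<in>{Suc 0..DIM('a)}. of_int (z j) *\<^sub>R coroot (alpha j))"
proof -
  assume a: "a \<in> R"
  show ?thesis
  proof (cases "a \<in> Rp")
    case True then show ?thesis using coroot_int_Rp by blast
  next
    case False
    then have "-a \<in> Rp" using a R_split Rm_iff by blast
    then obtain z where z: "coroot (-a) = (\<Sum>j\<in>{Suc 0..DIM('a)}. of_int (z j) *\<^sub>R coroot (alpha j))"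
      using coroot_int_Rp by blast
    have "coroot a = - coroot (-a)" by (simp add: coroot_neg)
    also have "\<dots> = (\<Sum>j\<in>{Suc 0..DIM('a)}. of_int (- z j) *\<^sub>R coroot (alpha j))"
      using z by (simp add: sum_negf)
    finally have "coroot a = (\<Sum>j\<in>{Suc 0..DIM('a)}. of_int (- z j) *\<^sub>R coroot (alpha j))" .
    then show ?thesis by (intro exI[of _ "\<lambda>j. - z j"])
  qed
qed

lemma full_support:
  assumes a: "a \<in> Rp" and dom: "\<forall>k\<in>{Suc 0..DIM('a)}. 0 \<le> a \<bullet> alpha k"
    and d: "\<forall>j. 0 \<le> d j" "coroot a = (\<Sum>j\<in>{Suc 0..DIM('a)}. d j *\<^sub>R coroot (alpha j))"
  shows "\<forall>j\<in>{Suc 0..DIM('a)}. 0 < d j"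
proof (rule ccontr)
  assume "\<not> ?thesis"
  then obtain j0 where j0: "j0 \<in> {Suc 0..DIM('a)}" "d j0 = 0" using d(1) by (metis less_eq_real_def)
  define J where "J = {j \<in> {Suc 0..DIM('a)}. 0 < d j}"
  have aa: "0 < a \<bullet> a" using a Rp_sub zero_notin by auto
  have orthJ: "alpha i \<bullet> alpha j = 0" if i: "i \<in> J" and j: "j \<in> {Suc 0..DIM('a)}" "j \<notin> J" for i j
  proof -
    have dj: "d j = 0" using j d(1) by (simp add: J_def) (metis less_eq_real_def)
    have iI: "i \<in> {Suc 0..DIM('a)}" and di: "0 < d i" using i by (auto simp: J_def)
    have terms: "\<forall>l\<in>{Suc 0..DIM('a)}. d l * (coroot (alpha l) \<bullet> alpha j) \<le> 0"
    proof
      fix l assume l: "l \<in> {Suc 0..DIM('a)}"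
      show "d l * (coroot (alpha l) \<bullet> alpha j) \<le> 0"
      proof (cases "l = j")
        case True then show ?thesis using dj by simp
      next
        case False
        have "alpha l \<bullet> alpha j \<le> 0" using simple_nonacute[OF l j(1) False] .
        moreover have "0 < alpha l \<bullet> alpha l" using alpha_nz[OF l] by simp
        ultimately have "coroot (alpha l) \<bullet> alpha j \<le> 0"
          by (simp add: coroot_def divide_nonpos_pos)
        then show ?thesis using d(1) by (simp add: mult_nonneg_nonpos)
      qed
    qed
    have "(\<Sum>l\<in>{Suc 0..DIM('a)}. d l * (coroot (alpha l) \<bullet> alpha j)) = coroot a \<bullet> alpha j"
      using d(2) by (simp add: inner_sum_left)
    moreover have "0 \<le> coroot a \<bullet> alpha j" using dom j(1) aa by (simp add: coroot_def)
    ultimately have "(\<Sum>l\<in>{Suc 0..DIM('a)}. - (d l * (coroot (alpha l) \<bullet> alpha j))) = 0"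
      using terms sum_nonpos[of "{Suc 0..DIM('a)}" "\<lambda>l. d l * (coroot (alpha l) \<bullet> alpha j)"]
      by (simp add: sum_negf)
    then have "\<forall>l\<in>{Suc 0..DIM('a)}. - (d l * (coroot (alpha l) \<bullet> alpha j)) = 0"
      using terms sum_nonneg_eq_0_iff[of "{Suc 0..DIM('a)}" "\<lambda>l. - (d l * (coroot (alpha l) \<bullet> alpha j))"] by simp
    then have "d i * (coroot (alpha i) \<bullet> alpha j) = 0" using iI by simp
    then have "coroot (alpha i) \<bullet> alpha j = 0" using di by simp
    then show ?thesis using alpha_nz[OF iI] by (simp add: coroot_def)
  qed
  define V1 where "V1 = {x. \<exists>r. x = (\<Sum>l\<in>{Suc 0..DIM('a)}. r l *\<^sub>R alpha l) \<and> (\<forall>l\<in>{Suc 0..DIM('a)}. l \<notin> J \<longrightarrow> r l = 0)}"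
  define V2 where "V2 = {x. \<exists>r. x = (\<Sum>l\<in>{Suc 0..DIM('a)}. r l *\<^sub>R alpha l) \<and> (\<forall>l\<in>{Suc 0..DIM('a)}. l \<in> J \<longrightarrow> r l = 0)}"
  have orthV: "x \<bullet> y = 0" if x: "x \<in> V1" and y: "y \<in> V2" for x y
  proof -
    obtain r where r: "x = (\<Sum>l\<in>{Suc 0..DIM('a)}. r l *\<^sub>R alpha l)" "\<forall>l\<in>{Suc 0..DIM('a)}. l \<notin> J \<longrightarrow> r l = 0" using x V1_def by auto
    obtain s where s: "y = (\<Sum>l\<in>{Suc 0..DIM('a)}. s l *\<^sub>R alpha l)" "\<forall>l\<in>{Suc 0..DIM('a)}. l \<in> J \<longrightarrow> s l = 0" using y V2_def by auto
    have ly: "alpha l \<bullet> y = 0" if l: "l \<in> J" for l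
    proof -
      have "alpha l \<bullet> y = (\<Sum>m\<in>{Suc 0..DIM('a)}. s m * (alpha l \<bullet> alpha m))" using s(1) by (simp add: inner_sum_right)
      also have "\<dots> = 0" using s(2) orthJ[OF l] by (intro sum.neutral ballI) (metis mult_zero_left mult_zero_right)
      finally show ?thesis .
    qed
    have "x \<bullet> y = (\<Sum>l\<in>{Suc 0..DIM('a)}. r l * (alpha l \<bullet> y))" using r(1) by (simp add: inner_sum_left)
    also have "\<dots> = 0" using r(2) ly by (intro sum.neutral ballI) (metis mult_zero_left mult_zero_right)
    finally show ?thesis .
  qed
  have V1_neg: "x \<in> V1 \<Longrightarrow> -x \<in> V1" for x
  proof -
    assume "x \<in> V1"
    then obtain r where r: "x = (\<Sum>l\<in>{Suc 0..DIM('a)}. r l *\<^sub>R alpha l)" "\<forall>l\<in>{Suc 0..DIM('a)}. l \<notin> J \<longrightarrow> r l = 0" using V1_def by auto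
    have "-x = (\<Sum>l\<in>{Suc 0..DIM('a)}. (- r l) *\<^sub>R alpha l)" using r(1) by (simp add: sum_negf)
    then show "-x \<in> V1" using r(2) unfolding V1_def by (intro CollectI exI[of _ "\<lambda>l. - r l"]) auto
  qed
  have V2_neg: "x \<in> V2 \<Longrightarrow> -x \<in> V2" for x
  proof -
    assume "x \<in> V2"
    then obtain r where r: "x = (\<Sum>l\<in>{Suc 0..DIM('a)}. r l *\<^sub>R alpha l)" "\<forall>l\<in>{Suc 0..DIM('a)}. l \<in> J \<longrightarrow> r l = 0" using V2_def by auto
    have "-x = (\<Sum>l\<in>{Suc 0..DIM('a)}. (- r l) *\<^sub>R alpha l)" using r(1) by (simp add: sum_negf)
    then show "-x \<in> V2" using r(2) unfolding V2_def by (intro CollectI exI[of _ "\<lambda>l. - r l"]) auto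
  qed
  have V1_add: "x \<in> V1 \<Longrightarrow> k \<in> J \<Longrightarrow> x + t *\<^sub>R alpha k \<in> V1" for x k t
  proof -
    assume x: "x \<in> V1" and k: "k \<in> J"
    obtain r where r: "x = (\<Sum>l\<in>{Suc 0..DIM('a)}. r l *\<^sub>R alpha l)" "\<forall>l\<in>{Suc 0..DIM('a)}. l \<notin> J \<longrightarrow> r l = 0" using x V1_def by auto
    have kI: "k \<in> {Suc 0..DIM('a)}" using k J_def by auto
    have "x + t *\<^sub>R alpha k = (\<Sum>l\<in>{Suc 0..DIM('a)}. (r l + (if l = k then t else 0)) *\<^sub>R alpha l)"
      using r(1) sum_delta_alpha[OF kI, of t] by (simp add: scaleR_add_left sum.distrib)
    then show ?thesis using r(2) k unfolding V1_def by (intro CollectI exI[of _ "\<lambda>l. r l + (if l = k then t else 0)"]) auto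
  qed
  have V2_add: "x \<in> V2 \<Longrightarrow> k \<in> {Suc 0..DIM('a)} \<Longrightarrow> k \<notin> J \<Longrightarrow> x + t *\<^sub>R alpha k \<in> V2" for x k t
  proof -
    assume x: "x \<in> V2" and kI: "k \<in> {Suc 0..DIM('a)}" and k: "k \<notin> J"
    obtain r where r: "x = (\<Sum>l\<in>{Suc 0..DIM('a)}. r l *\<^sub>R alpha l)" "\<forall>l\<in>{Suc 0..DIM('a)}. l \<in> J \<longrightarrow> r l = 0" using x V2_def by auto
    have "x + t *\<^sub>R alpha k = (\<Sum>l\<in>{Suc 0..DIM('a)}. (r l + (if l = k then t else 0)) *\<^sub>R alpha l)"
      using r(1) sum_delta_alpha[OF kI, of t] by (simp add: scaleR_add_left sum.distrib)
    then show ?thesis using r(2) k unfolding V2_def by (intro CollectI exI[of _ "\<lambda>l. r l + (if l = k then t else 0)"]) auto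
  qed
  have z1: "0 \<in> V1" unfolding V1_def by (intro CollectI exI[of _ "\<lambda>_. 0"]) simp
  have z2: "0 \<in> V2" unfolding V2_def by (intro CollectI exI[of _ "\<lambda>_. 0"]) simp
  have simpleV1: "k \<in> J \<Longrightarrow> alpha k \<in> V1" for k using V1_add[OF z1, of k 1] by simp
  have simpleV2: "k \<in> {Suc 0..DIM('a)} \<Longrightarrow> k \<notin> J \<Longrightarrow> alpha k \<in> V2" for k using V2_add[OF z2, of k 1] by simp
  have allRp: "c \<in> V1 \<or> c \<in> V2" if c: "c \<in> Rp" for c
    using c
  proof (induction rule: ht_induct)
    case (simple k) then show ?case using simpleV1 simpleV2 J_def by blast
  next
    case (step c k)
    let ?b = "rrefl (alpha k) c"
    have cb: "c = ?b - (?b \<bullet> coroot (alpha k)) *\<^sub>R alpha k"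
      using alpha_nz[OF step(2)] by (metis rrefl_def rrefl_rrefl)
    have "?b \<in> V1 \<or> ?b \<in> V2" using step by blast
    then show ?case
    proof
      assume b1: "?b \<in> V1"
      show ?thesis
      proof (cases "k \<in> J")
        case True
        then show ?thesis using V1_add[OF b1 True, of "- (?b \<bullet> coroot (alpha k))"] cb by simp
      next
        case False
        have "?b \<bullet> alpha k = 0" using orthV[OF b1 simpleV2[OF step(2) False]] .
        then have "?b \<bullet> coroot (alpha k) = 0" by (simp add: coroot_def)
        then show ?thesis using cb b1 by simp
      qed
    next
      assume b2: "?b \<in> V2"
      show ?thesis
      proof (cases "k \<in> J")
        case False
        then show ?thesis using V2_add[OF b2 step(2) False, of "- (?b \<bullet> coroot (alpha k))"] cb by simp
      next
        case True
        have "alpha k \<bullet> ?b = 0" using orthV[OF simpleV1[OF True] b2] .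
        then have "?b \<bullet> coroot (alpha k) = 0" by (simp add: coroot_def inner_commute)
        then show ?thesis using cb b2 by simp
      qed
    qed
  qed
  have allR: "c \<in> V1 \<or> c \<in> V2" if c: "c \<in> R" for c
  proof (cases "c \<in> Rp")
    case True then show ?thesis using allRp by blast
  next
    case False
    then have "-c \<in> Rp" using c R_split Rm_iff by blast
    then have "-c \<in> V1 \<or> -c \<in> V2" using allRp by blast
    then show ?thesis using V1_neg V2_neg by fastforce
  qed
  have Jne: "J \<noteq> {}"
  proof
    assume "J = {}"
    then have "\<forall>j\<in>{Suc 0..DIM('a)}. d j = 0" using d(1) J_def by (auto simp: less_eq_real_def)
    then have "coroot a = 0" using d(2) by simp
    then show False using coroot_nz a Rp_sub nz by blast
  qed
  then obtain i where i: "i \<in> J" by blast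
  have iI: "i \<in> {Suc 0..DIM('a)}" using i J_def by auto
  have j0J: "j0 \<notin> J" using j0 J_def by auto
  have notV1: "alpha j0 \<notin> V1"
  proof
    assume "alpha j0 \<in> V1"
    then obtain r where r: "alpha j0 = (\<Sum>l\<in>{Suc 0..DIM('a)}. r l *\<^sub>R alpha l)" "\<forall>l\<in>{Suc 0..DIM('a)}. l \<notin> J \<longrightarrow> r l = 0"
      using V1_def by auto
    have "(\<Sum>l\<in>{Suc 0..DIM('a)}. (if l = j0 then 1 else 0) *\<^sub>R alpha l) = (\<Sum>l\<in>{Suc 0..DIM('a)}. r l *\<^sub>R alpha l)"
      using r(1) sum_delta_alpha[OF j0(1), of 1] by simp
    then have "(if j0 = j0 then 1 else 0) = r j0" by (rule coeff_eq) (rule j0(1))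
    then show False using r(2) j0J j0(1) by simp
  qed
  show False
  proof (rule irred[of "R \<inter> V1" "R - V1"])
    show "R \<inter> V1 \<noteq> {}" using alpha_R[OF iI] simpleV1[OF i] by blast
    show "R - V1 \<noteq> {}" using alpha_R[OF j0(1)] notV1 by blast
    show "R = (R \<inter> V1) \<union> (R - V1)" by blast
    show "\<forall>a\<in>R \<inter> V1. \<forall>b\<in>R - V1. a \<bullet> b = 0" using allR orthV by blast
  qed
qed

lemma Rp_ne: "Rp \<noteq> {}"
proof -
  have "1 \<in> {Suc 0..DIM('a)}" using DIM_positive[where 'a='a] by simp
  then show ?thesis using alpha_Rp by blast
qed

lemma highest_C: "\<exists>a\<in>Rp. \<forall>b\<in>Rp. coroot a - coroot b \<in> C"
proof -
  obtain a where a: "a \<in> Rp" "\<forall>b\<in>Rp. ht2 b \<le> ht2 a" using ex_max[OF finRp Rp_ne] by blast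
  have aa: "0 < a \<bullet> a" using a Rp_sub zero_notin by auto
  have domA: "\<forall>k\<in>{Suc 0..DIM('a)}. 0 \<le> a \<bullet> alpha k"
  proof (rule ccontr)
    assume "\<not> ?thesis"
    then obtain k where k: "k \<in> {Suc 0..DIM('a)}" "a \<bullet> alpha k < 0" by (auto simp: not_le)
    have r: "rrefl (alpha k) a \<in> Rp \<and> coroot (rrefl (alpha k) a) - coroot a \<in> C \<and> coroot (rrefl (alpha k) a) \<noteq> coroot a"
      using raise[OF a(1) k] .
    then have "ht2 a < ht2 (rrefl (alpha k) a)" using C_diff_ht2 by blast
    then show False using a(2) r by fastforce
  qed
  obtain d where d: "\<forall>j. 0 \<le> d j" "coroot a = (\<Sum>j\<in>{Suc 0..DIM('a)}. d j *\<^sub>R coroot (alpha j))"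
    using Rp_coroot_rep[OF a(1)] by blast
  have full: "\<forall>j\<in>{Suc 0..DIM('a)}. 0 < d j" using full_support[OF a(1) domA d] .
  have "coroot a - coroot b \<in> C" if b: "b \<in> Rp" for b
  proof -
    define S where "S = {c \<in> Rp. coroot c - coroot b \<in> C}"
    have bS: "b \<in> S" using b C_zero by (simp add: S_def)
    have finS: "finite S" using finRp by (simp add: S_def)
    obtain c where c: "c \<in> S" "\<forall>e\<in>S. ht2 e \<le> ht2 c"
      using ex_max[OF finS, of ht2] bS by blast
    have cRp: "c \<in> Rp" and cb: "coroot c - coroot b \<in> C" using c(1) by (auto simp: S_def)
    have domC: "\<forall>k\<in>{Suc 0..DIM('a)}. 0 \<le> c \<bullet> alpha k"
    proof (rule ccontr)
      assume "\<not> ?thesis"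
      then obtain k where k: "k \<in> {Suc 0..DIM('a)}" "c \<bullet> alpha k < 0" by (auto simp: not_le)
      have r: "rrefl (alpha k) c \<in> Rp \<and> coroot (rrefl (alpha k) c) - coroot c \<in> C \<and> coroot (rrefl (alpha k) c) \<noteq> coroot c"
        using raise[OF cRp k] .
      have "(coroot (rrefl (alpha k) c) - coroot c) + (coroot c - coroot b) \<in> C" using C_add r cb by blast
      then have "coroot (rrefl (alpha k) c) - coroot b \<in> C" by simp
      then have "rrefl (alpha k) c \<in> S" using r by (simp add: S_def)
      moreover have "ht2 c < ht2 (rrefl (alpha k) c)" using C_diff_ht2 r by blast
      ultimately show False using c(2) by fastforce
    qed
    obtain k where k: "k \<in> {Suc 0..DIM('a)}" "0 < c \<bullet> alpha k" using exists_simple_pos[OF cRp] by blast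
    have "0 < (\<Sum>j\<in>{Suc 0..DIM('a)}. d j * (coroot (alpha j) \<bullet> c))"
    proof (rule sum_pos2[of "{Suc 0..DIM('a)}" k])
      show "finite ({Suc 0..DIM('a)})" by simp
      show "k \<in> {Suc 0..DIM('a)}" by (rule k(1))
      show "0 < d k * (coroot (alpha k) \<bullet> c)"
        using full k alpha_nz[OF k(1)] by (simp add: coroot_def inner_commute)
      show "\<And>j. j \<in> {Suc 0..DIM('a)} \<Longrightarrow> 0 \<le> d j * (coroot (alpha j) \<bullet> c)"
        using d(1) domC alpha_nz by (simp add: coroot_def inner_commute)
    qed
    also have "(\<Sum>j\<in>{Suc 0..DIM('a)}. d j * (coroot (alpha j) \<bullet> c)) = coroot a \<bullet> c"
      using d(2) by (simp add: inner_sum_left)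
    finally have h: "0 < coroot a \<bullet> c" .
    then have "0 < a \<bullet> c" using aa by (auto simp: coroot_def zero_less_divide_iff zero_less_mult_iff)
    show ?thesis
    proof (cases "a = c")
      case True then show ?thesis using cb by simp
    next
      case False
      obtain e where e: "e \<in> R" "coroot a - coroot c = coroot e"
        using diff_coroot[OF Rp_sub[OF a(1)] Rp_sub[OF cRp] \<open>0 < a \<bullet> c\<close> False] by blast
      show ?thesis
      proof (cases "e \<in> Rp")
        case True
        have "coroot a - coroot b = coroot e + (coroot c - coroot b)" using e by (simp add: algebra_simps)
        then show ?thesis using C_add[OF iffD2[OF coroot_C Rp_C[OF True]] cb] by (simp add: algebra_simps)
      next
        case False
        then have "-e \<in> Rp" using e R_split Rm_iff by blast
        then have "coroot c - coroot a \<in> C" using e(2) Rp_C coroot_C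
          by (metis coroot_neg minus_diff_eq)
        moreover have "coroot c \<noteq> coroot a"
          using coroot_inj \<open>a \<noteq> c\<close> nz Rp_sub a(1) cRp by metis
        ultimately have "ht2 a < ht2 c" using C_diff_ht2 by blast
        then show ?thesis using a(2) cRp by fastforce
      qed
    qed
  qed
  then show ?thesis using a(1) by blast
qed

lemma nonneg_int_comb_C: "x \<in> nonneg_int_comb (\<lambda>j. coroot (alpha j)) \<Longrightarrow> x \<in> C"
proof -
  assume "x \<in> nonneg_int_comb (\<lambda>j. coroot (alpha j))"
  then obtain c :: "nat \<Rightarrow> int" where c: "\<forall>j. 0 \<le> c j" "x = (\<Sum>j\<in>{Suc 0..DIM('a)}. of_int (c j) *\<^sub>R coroot (alpha j))"
    by (auto simp: nonneg_int_comb_def)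
  have "(\<Sum>j\<in>{Suc 0..DIM('a)}. of_int (c j) *\<^sub>R coroot (alpha j)) \<in> C"
    using c(1) C_alpha by (intro C_sum) (auto simp: coroot_C)
  then show ?thesis using c(2) by simp
qed

lemma C_int_nonneg:
  assumes x: "x \<in> C" and z: "x = (\<Sum>j\<in>{Suc 0..DIM('a)}. of_int (z j) *\<^sub>R coroot (alpha j))"
  shows "x \<in> nonneg_int_comb (\<lambda>j. coroot (alpha j))"
proof -
  obtain r where r: "\<forall>j. 0 \<le> r j" "x = (\<Sum>j\<in>{Suc 0..DIM('a)}. r j *\<^sub>R alpha j)" using x C_def by auto
  have x2: "x = (\<Sum>j\<in>{Suc 0..DIM('a)}. (of_int (z j) * (2 / (alpha j \<bullet> alpha j))) *\<^sub>R alpha j)"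
    using z by (simp add: coroot_def)
  have zn: "0 \<le> z j" if j: "j \<in> {Suc 0..DIM('a)}" for j
  proof -
    have rj: "r j = of_int (z j) * (2 / (alpha j \<bullet> alpha j))" using coeff_eq[OF _ j] r(2) x2 by metis
    have pos: "0 < 2 / (alpha j \<bullet> alpha j)" using alpha_nz[OF j] by simp
    have h1: "0 \<le> of_int (z j) * (2 / (alpha j \<bullet> alpha j))" using r(1) rj by metis
    show ?thesis
    proof (rule ccontr)
      assume "\<not> 0 \<le> z j"
      then have "(of_int (z j)::real) < 0" by simp
      then have "of_int (z j) * (2 / (alpha j \<bullet> alpha j)) < 0" using pos by (rule mult_neg_pos)
      then show False using h1 by linarith
    qed
  qed
  define c where "c j = (if j \<in> {Suc 0..DIM('a)} then z j else 0)" for j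
  have "x = (\<Sum>j\<in>{Suc 0..DIM('a)}. of_int (c j) *\<^sub>R coroot (alpha j))" using z by (simp add: c_def)
  moreover have "\<forall>j. 0 \<le> c j" using zn by (simp add: c_def)
  ultimately show ?thesis unfolding nonneg_int_comb_def by auto
qed

lemma alpha0_ex1: "\<exists>!a. a \<in> Rp \<and> (\<forall>b\<in>Rp. coroot a - coroot b \<in> nonneg_int_comb (\<lambda>j. coroot (alpha j)))"
proof -
  obtain a where a: "a \<in> Rp" "\<forall>b\<in>Rp. coroot a - coroot b \<in> C" using highest_C by blast
  have P: "\<forall>b\<in>Rp. coroot a - coroot b \<in> nonneg_int_comb (\<lambda>j. coroot (alpha j))"
  proof
    fix b assume b: "b \<in> Rp"
    obtain za where za: "coroot a = (\<Sum>j\<in>{Suc 0..DIM('a)}. of_int (za j) *\<^sub>R coroot (alpha j))"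
      using coroot_int[OF Rp_sub[OF a(1)]] by blast
    obtain zb where zb: "coroot b = (\<Sum>j\<in>{Suc 0..DIM('a)}. of_int (zb j) *\<^sub>R coroot (alpha j))"
      using coroot_int[OF Rp_sub[OF b]] by blast
    have "coroot a - coroot b = (\<Sum>j\<in>{Suc 0..DIM('a)}. of_int (za j - zb j) *\<^sub>R coroot (alpha j))"
      using za zb by (simp add: scaleR_diff_left sum_subtractf)
    then show "coroot a - coroot b \<in> nonneg_int_comb (\<lambda>j. coroot (alpha j))"
      by (rule C_int_nonneg[OF a(2)[rule_format, OF b]])
  qed
  show ?thesis
  proof (rule ex1I[of _ a])
    show "a \<in> Rp \<and> (\<forall>b\<in>Rp. coroot a - coroot b \<in> nonneg_int_comb (\<lambda>j. coroot (alpha j)))" using a(1) P by blast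
  next
    fix a' assume a': "a' \<in> Rp \<and> (\<forall>b\<in>Rp. coroot a' - coroot b \<in> nonneg_int_comb (\<lambda>j. coroot (alpha j)))"
    have h1: "coroot a' - coroot a \<in> C" using nonneg_int_comb_C a'[THEN conjunct2, rule_format, OF a(1)] by blast
    have h2: "- (coroot a' - coroot a) \<in> C" using a(2)[rule_format, of a'] a' by simp
    have "coroot a' - coroot a = 0" using C_pointed[OF h1 h2] .
    then have "coroot a' = coroot a" by simp
    then show "a' = a" using coroot_inj[OF nz[OF Rp_sub[OF conjunct1[OF a']]] nz[OF Rp_sub[OF a(1)]]] by blast
  qed
qed

lemma alpha0_Rp: "alpha0 R alpha \<in> Rp"
  and alpha0_high: "b \<in> Rp \<Longrightarrow> coroot (alpha0 R alpha) - coroot b \<in> C"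
proof -
  have H: "alpha0 R alpha \<in> Rp \<and> (\<forall>b\<in>Rp. coroot (alpha0 R alpha) - coroot b \<in> nonneg_int_comb (\<lambda>j. coroot (alpha j)))"
    unfolding alpha0_def by (rule theI'[OF alpha0_ex1])
  from H show "alpha0 R alpha \<in> Rp" by blast
  from H show "b \<in> Rp \<Longrightarrow> coroot (alpha0 R alpha) - coroot b \<in> C"
    using nonneg_int_comb_C by blast
qed


lemma refl_coroot_gen: "r \<noteq> 0 \<Longrightarrow> coroot (rrefl r c) = coroot c - (r \<bullet> coroot c) *\<^sub>R coroot r"
proof -
  assume r: "r \<noteq> 0"
  have "coroot (rrefl r c) = rrefl r (coroot c)"
    using orth_coroot[OF orth_rrefl[OF r]] by simp
  also have "\<dots> = coroot c - (coroot c \<bullet> coroot r) *\<^sub>R r" by (simp add: rrefl_def)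
  also have "(coroot c \<bullet> coroot r) *\<^sub>R r = (coroot c \<bullet> r) *\<^sub>R coroot r" by (rule inner_coroot_swap)
  finally show ?thesis by (simp add: inner_commute)
qed

lemma alpha0_le1:
  assumes dom0: "alpha0 R alpha \<in> dominant R alpha" and b: "b \<in> Rp" "b \<noteq> alpha0 R alpha"
  shows "alpha0 R alpha \<bullet> coroot b \<le> 1"
proof (rule ccontr)
  let ?a = "alpha0 R alpha"
  let ?t = "?a \<bullet> coroot b"
  assume "\<not> ?thesis"
  then have t1: "1 < ?t" by simp
  have aR: "?a \<in> R" using Rp_sub alpha0_Rp by blast
  have bR: "b \<in> R" using Rp_sub b(1) by blast
  have tI: "?t \<in> \<int>" using integral[OF bR aR] .
  have t2: "2 \<le> ?t"
  proof -
    obtain z where z: "?t = of_int z" using tI real_int_cases by blast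
    then have "1 < z" using t1 by simp
    then have "2 \<le> z" by simp
    then show ?thesis using z by simp
  qed
  let ?e = "- rrefl ?a b"
  have eR: "?e \<in> R" using neg_root refl_closed[OF aR bR] by blast
  have ce: "coroot ?e = ?t *\<^sub>R coroot ?a - coroot b"
    using refl_coroot_gen[OF nz[OF aR], of b] by (simp add: coroot_neg)
  have hi: "coroot ?a - coroot b \<in> C" using alpha0_high[OF b(1)] .
  have ca: "coroot ?a \<in> C" using Rp_C[OF alpha0_Rp] coroot_C by blast
  have "coroot ?e = (?t - 1) *\<^sub>R coroot ?a + (coroot ?a - coroot b)"
    using ce by (simp add: algebra_simps)
  also have "\<dots> \<in> C" using C_add[OF C_scale[OF ca] hi] t1 by simp
  finally have "?e \<in> Rp" using eR root_C coroot_C by blast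
  then have hi2: "coroot ?a - coroot ?e \<in> C" using alpha0_high by blast
  have "coroot ?a - coroot ?e = coroot b - (?t - 1) *\<^sub>R coroot ?a"
    using ce by (simp add: algebra_simps)
  then have hi3: "coroot b - (?t - 1) *\<^sub>R coroot ?a \<in> C" using hi2 by simp
  have "(coroot ?a - coroot b) + (coroot b - (?t - 1) *\<^sub>R coroot ?a) = (2 - ?t) *\<^sub>R coroot ?a"
    by (simp add: algebra_simps scaleR_2)
  then have sC: "(2 - ?t) *\<^sub>R coroot ?a \<in> C" using C_add[OF hi hi3] by simp
  have cnz: "coroot ?a \<noteq> 0" using coroot_nz nz[OF aR] by blast
  show False
  proof (cases "?t = 2")
    case True
    then have "coroot b - coroot ?a \<in> C" using hi3 by simp
    then have "coroot ?a - coroot b = 0" using C_pointed[OF hi] by simp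
    then have "coroot ?a = coroot b" by simp
    then show False using coroot_inj nz aR bR b(2) by metis
  next
    case False
    then have gt: "0 < ?t - 2" using t2 by simp
    have "- ((2 - ?t) *\<^sub>R coroot ?a) \<in> C" using C_scale[OF ca, of "?t - 2"] gt by (simp add: algebra_simps)
    then have "(2 - ?t) *\<^sub>R coroot ?a = 0" using C_pointed[OF sC] by simp
    then show False using cnz False by simp
  qed
qed

lemma orbit_pair: "y \<in> W0 R \<Longrightarrow> y om \<bullet> coroot b = om \<bullet> coroot (winv y b)"
  using W0_shift W0_coroot winv_W0 by metis

lemma small_orbit:
  assumes om: "\<forall>c\<in>Rp. c \<noteq> om \<longrightarrow> 0 \<le> om \<bullet> coroot c \<and> om \<bullet> coroot c \<le> 1"
    and y: "y \<in> W0 R" and b: "b \<in> R" "b \<noteq> y om" "b \<noteq> - y om"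
  shows "\<bar>y om \<bullet> coroot b\<bar> \<le> 1"
proof -
  let ?c = "winv y b"
  have cR: "?c \<in> R" using W0_R[OF winv_W0[OF y] b(1)] .
  have e: "y om \<bullet> coroot b = om \<bullet> coroot ?c" using orbit_pair[OF y] .
  have c1: "?c \<noteq> om" using b(2) winv_r[OF y, of b] by metis
  have c2: "-?c \<noteq> om"
  proof
    assume "-?c = om"
    then have "y (-?c) = y om" by simp
    then have "- b = y om" using W0_neg[OF y] winv_r[OF y, of b] by simp
    then show False using b(3) by (metis minus_minus)
  qed
  show ?thesis
  proof (cases "?c \<in> Rp")
    case True then show ?thesis using om c1 e by fastforce
  next
    case False
    then have "-?c \<in> Rp" using cR R_split Rm_iff by blast
    then have "0 \<le> om \<bullet> coroot (-?c) \<and> om \<bullet> coroot (-?c) \<le> 1" using om c2 by blast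
    then show ?thesis using e by (simp add: coroot_neg)
  qed
qed

lemma small_orbit_all:
  assumes om: "\<forall>c\<in>Rp. 0 \<le> om \<bullet> coroot c \<and> om \<bullet> coroot c \<le> 1"
    and y: "y \<in> W0 R" and b: "b \<in> R"
  shows "\<bar>y om \<bullet> coroot b\<bar> \<le> 1"
proof -
  let ?c = "winv y b"
  have cR: "?c \<in> R" using W0_R[OF winv_W0[OF y] b(1)] .
  have e: "y om \<bullet> coroot b = om \<bullet> coroot ?c" using orbit_pair[OF y] .
  show ?thesis
  proof (cases "?c \<in> Rp")
    case True then show ?thesis using om e by fastforce
  next
    case False
    then have "-?c \<in> Rp" using cR R_split Rm_iff by blast
    then have "0 \<le> om \<bullet> coroot (-?c) \<and> om \<bullet> coroot (-?c) \<le> 1" using om by blast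
    then show ?thesis using e by (simp add: coroot_neg)
  qed
qed

lemma stab_lemma:
  assumes w: "w \<in> W0 R" and lam: "lam \<in> dominant R alpha"
    and z: "\<forall>b\<in>inv_set R alpha w. lam \<bullet> coroot b = 0"
  shows "w lam = lam"
proof (rule F2[OF w lam])
  have lw: "lam \<in> weights R" using lam dom_iff by blast
  show "w lam \<in> dominant R alpha"
    unfolding dom_iff
  proof (intro conjI ballI)
    show "w lam \<in> weights R" using W0_weights[OF w lw] .
    fix a assume a: "a \<in> Rp"
    let ?c = "winv w a"
    have cR: "?c \<in> R" using W0_R[OF winv_W0[OF w] Rp_sub[OF a]] .
    have e: "w lam \<bullet> coroot a = lam \<bullet> coroot ?c" using orbit_pair[OF w] .
    show "0 \<le> w lam \<bullet> coroot a"
    proof (cases "?c \<in> Rp")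
      case True then show ?thesis using e lam by (simp add: dom_iff)
    next
      case False
      then have nc: "-?c \<in> Rp" using cR R_split Rm_iff by blast
      have "w (-?c) = - a" using W0_neg[OF w] winv_r[OF w] by simp
      then have "-?c \<in> inv_set R alpha w" using nc a neg_Rp_Rm by (simp add: inv_set_def)
      then have "lam \<bullet> coroot (-?c) = 0" using z by blast
      then show ?thesis using e by (simp add: coroot_neg)
    qed
  qed
qed


lemma W0_pair: "u \<in> W0 R \<Longrightarrow> u x \<bullet> coroot (u a) = x \<bullet> coroot a"
  using W0_coroot W0_inner by metis

lemma inv_set_id: "inv_set R alpha id = {}"
  using Rp_not_Rm by (auto simp: inv_set_def)

lemma Q:
  assumes lam: "lam \<in> dominant R alpha"
    and S: "\<forall>v\<in>W0 R. \<forall>b\<in>R. b \<noteq> v nu \<longrightarrow> b \<noteq> - v nu \<longrightarrow> \<bar>v nu \<bullet> coroot b\<bar> \<le> 1"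
    and ln: "lam \<bullet> coroot nu = 1"
  shows "\<forall>u\<in>W0 R. u lam = lam \<longrightarrow> u nu \<in> Rp \<longrightarrow> ht (u nu) \<le> real n \<longrightarrow>
           inv_set R alpha u \<subseteq> {b \<in> Rp. lam \<bullet> coroot b = 0 \<and> nu \<bullet> coroot b = 1} \<longrightarrow>
           (\<exists>u'\<in>W0 R. \<exists>j\<in>{Suc 0..DIM('a)}. u' lam = lam \<and> u' nu = alpha j \<and>
               inv_set R alpha u' \<subseteq> {b \<in> Rp. lam \<bullet> coroot b = 0 \<and> nu \<bullet> coroot b = 1})"
proof (induction n)
  case 0 then show ?case using ht_pos by fastforce
next
  case (Suc n)
  let ?T = "{b \<in> Rp. lam \<bullet> coroot b = 0 \<and> nu \<bullet> coroot b = 1}"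
  have lw: "lam \<in> weights R" using lam dom_iff by blast
  show ?case
  proof (intro ballI impI)
    fix u assume u: "u \<in> W0 R" and ul: "u lam = lam" and up: "u nu \<in> Rp"
      and h: "ht (u nu) \<le> real (Suc n)" and iu: "inv_set R alpha u \<subseteq> ?T"
    let ?y = "u nu"
    have yR: "?y \<in> R" using Rp_sub[OF up] .
    show "\<exists>u'\<in>W0 R. \<exists>j\<in>{Suc 0..DIM('a)}. u' lam = lam \<and> u' nu = alpha j \<and> inv_set R alpha u' \<subseteq> ?T"
    proof (cases "\<exists>j\<in>{Suc 0..DIM('a)}. ?y = alpha j")
      case True then show ?thesis using u ul iu by blast
    next
      case False
      have ly: "lam \<bullet> coroot ?y = 1" using W0_pair[OF u, of lam nu] ul ln by simp
      have yy: "?y \<bullet> coroot ?y = 2" using inner_coroot_self nz[OF yR] by blast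
      have ybound: "?y \<bullet> coroot (alpha j) \<le> 1" if j: "j \<in> {Suc 0..DIM('a)}" for j
      proof -
        have "alpha j \<noteq> ?y" using False j by metis
        moreover have "alpha j \<noteq> - ?y" using alpha_Rp[OF j] neg_Rp_Rm[OF up] Rp_not_Rm by metis
        ultimately have "\<bar>?y \<bullet> coroot (alpha j)\<bar> \<le> 1" using S u alpha_R[OF j] by blast
        then show ?thesis by simp
      qed
      have "\<exists>k\<in>{Suc 0..DIM('a)}. 0 < ?y \<bullet> coroot (alpha k) \<and> lam \<bullet> coroot (alpha k) = 0"
      proof (rule ccontr)
        assume "\<not> ?thesis"
        then have H: "\<forall>k\<in>{Suc 0..DIM('a)}. 0 < ?y \<bullet> coroot (alpha k) \<longrightarrow> lam \<bullet> coroot (alpha k) \<noteq> 0" by blast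
        obtain d where d: "\<forall>j. 0 \<le> d j" "coroot ?y = (\<Sum>j\<in>{Suc 0..DIM('a)}. d j *\<^sub>R coroot (alpha j))"
          using Rp_coroot_rep[OF up] by blast
        have le: "?y \<bullet> coroot (alpha j) \<le> lam \<bullet> coroot (alpha j)" if j: "j \<in> {Suc 0..DIM('a)}" for j
        proof -
          have l0: "0 \<le> lam \<bullet> coroot (alpha j)" using lam alpha_Rp[OF j] by (simp add: dom_iff)
          have lI: "lam \<bullet> coroot (alpha j) \<in> \<int>" using weights_int[OF lw alpha_R[OF j]] .
          show ?thesis
          proof (cases "0 < ?y \<bullet> coroot (alpha j)")
            case True
            then have "lam \<bullet> coroot (alpha j) \<noteq> 0" using H j by blast
            then have "1 \<le> lam \<bullet> coroot (alpha j)" using int_pos_ge1 lI l0 by simp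
            then show ?thesis using ybound[OF j] by simp
          next
            case False then show ?thesis using l0 by simp
          qed
        qed
        have "?y \<bullet> coroot ?y = (\<Sum>j\<in>{Suc 0..DIM('a)}. d j * (?y \<bullet> coroot (alpha j)))"
          using d(2) by (simp add: inner_sum_right)
        also have "\<dots> \<le> (\<Sum>j\<in>{Suc 0..DIM('a)}. d j * (lam \<bullet> coroot (alpha j)))"
          using le d(1) by (intro sum_mono mult_left_mono) auto
        also have "\<dots> = lam \<bullet> coroot ?y" using d(2) by (simp add: inner_sum_right)
        finally show False using yy ly by simp
      qed
      then obtain k where k: "k \<in> {Suc 0..DIM('a)}" "0 < ?y \<bullet> coroot (alpha k)" "lam \<bullet> coroot (alpha k) = 0" by blast
      have yk: "?y \<bullet> coroot (alpha k) = 1"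
        using int_pos_ge1[OF integral[OF alpha_R[OF k(1)] yR] k(2)] ybound[OF k(1)] by simp
      have yne: "?y \<noteq> alpha k" using False k(1) by blast
      let ?s = "rrefl (alpha k)"
      let ?u' = "?s \<circ> u"
      have u'W: "?u' \<in> W0 R" using W0_comp[OF rrefl_alpha_W0[OF k(1)] u] .
      have u'l: "?u' lam = lam" using ul k(3) by (simp add: rrefl_def)
      have u'p: "?u' nu \<in> Rp" using SR[OF k(1) up yne] by simp
      have "ht (?u' nu) = ht ?y - ?y \<bullet> coroot (alpha k)"
        by (simp add: ht_def rrefl_def inner_diff_left alpha_rho[OF k(1)])
      then have u'h: "ht (?u' nu) \<le> real n" using yk h by simp
      have u'i: "inv_set R alpha ?u' \<subseteq> ?T"
      proof
        fix a assume a: "a \<in> inv_set R alpha ?u'"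
        then have aRp: "a \<in> Rp" and m: "?s (u a) \<in> Rm" by (auto simp: inv_set_def)
        have uaR: "u a \<in> R" using W0_R[OF u Rp_sub[OF aRp]] .
        show "a \<in> ?T"
        proof (cases "u a \<in> Rm")
          case True
          then show ?thesis using aRp iu by (auto simp: inv_set_def)
        next
          case False
          then have "u a \<in> Rp" using uaR R_split by blast
          then have ua: "u a = alpha k" using SR_neg[OF k(1) _ m] by blast
          have "lam \<bullet> coroot a = 0" using W0_pair[OF u, of lam a] ul ua k(3) by simp
          moreover have "nu \<bullet> coroot a = 1" using W0_pair[OF u, of nu a] ua yk by simp
          ultimately show ?thesis using aRp by simp
        qed
      qed
      show ?thesis using Suc.IH u'W u'l u'p u'h u'i by blast
    qed
  qed
qed

lemma inv_refl_alpha: "j \<in> {Suc 0..DIM('a)} \<Longrightarrow> inv_set R alpha (rrefl (alpha j)) = {alpha j}"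
proof -
  assume j: "j \<in> {Suc 0..DIM('a)}"
  have "rrefl (alpha j) (alpha j) \<in> Rm" using alpha_nz[OF j] alpha_Rp[OF j] neg_Rp_Rm by (simp add: rrefl_self)
  then show ?thesis using SR_neg[OF j] alpha_Rp[OF j] by (auto simp: inv_set_def)
qed

lemma weights_zero: "0 \<in> weights R" by (simp add: weights_def)

lemma q_eq:
  assumes q_mult: "length_multiplicative R alpha q"
    and dom0: "alpha0 R alpha \<in> dominant R alpha"
    and z: "z \<in> W0 R" and j: "j \<in> {Suc 0..DIM('a)}" and za: "z (alpha0 R alpha) = alpha j"
    and m: "m \<in> weights R" and m1: "m \<bullet> coroot (alpha0 R alpha) = 1"
  shows "q (rrefl (alpha j)) = q (s0 R alpha)"
proof -
  let ?a = "alpha0 R alpha"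
  let ?sj = "rrefl (alpha j)"
  have aRp: "?a \<in> Rp" using alpha0_Rp .
  have aR: "?a \<in> R" using Rp_sub[OF aRp] .
  have a0: "?a \<noteq> 0" using nz[OF aR] .
  define v where "v = rrefl ?a \<circ> winv z"
  define v' where "v' = z \<circ> rrefl ?a"
  have vW: "v \<in> W0 R" unfolding v_def using W0_comp[OF refl_W0[OF aR] winv_W0[OF z]] .
  have v'W: "v' \<in> W0 R" unfolding v'_def using W0_comp[OF z refl_W0[OF aR]] .
  have vv': "\<forall>x. v (v' x) = x" unfolding v_def v'_def using winv_l[OF z] a0 by (simp add: rrefl_rrefl)
  have v'v: "\<forall>x. v' (v x) = x" unfolding v_def v'_def using winv_r[OF z] a0 by (simp add: rrefl_rrefl)
  have va: "v (alpha j) = - ?a" unfolding v_def using winv_l[OF z, of ?a] za a0 by (simp add: rrefl_self)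
  have v'a: "v' ?a = - alpha j" unfolding v'_def using W0_neg[OF z] za a0 by (simp add: rrefl_self)
  define U where "U = (\<lambda>x. v x + m)"
  have comm: "U \<circ> ?sj = s0 R alpha \<circ> U"
  proof
    fix x
    have lv: "linear v" using W0_orth[OF vW] orth_linear by blast
    have c: "v x \<bullet> coroot ?a = - (x \<bullet> coroot (alpha j))"
    proof -
      have "coroot (- ?a) = v (coroot (alpha j))" using W0_coroot[OF vW, of "alpha j"] va by simp
      then have "coroot ?a = - v (coroot (alpha j))" by (metis coroot_neg minus_minus)
      then show ?thesis using W0_inner[OF vW] by simp
    qed
    have "(U \<circ> ?sj) x = v x - (x \<bullet> coroot (alpha j)) *\<^sub>R v (alpha j) + m"
      unfolding U_def by (simp add: rrefl_def linear_diff[OF lv] linear_scale[OF lv])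
    also have "\<dots> = v x + (x \<bullet> coroot (alpha j)) *\<^sub>R ?a + m" using va by simp
    also have "\<dots> = (s0 R alpha \<circ> U) x"
      unfolding U_def s0_def using c m1 by (simp add: inner_add_left algebra_simps)
    finally show "(U \<circ> ?sj) x = (s0 R alpha \<circ> U) x" .
  qed
  have Usj: "U \<circ> ?sj = (\<lambda>x. (v \<circ> ?sj) x + m)" unfolding U_def by (simp add: comp_def)
  have sjW: "?sj \<in> W0 R" using rrefl_alpha_W0[OF j] .
  have vsW: "v \<circ> ?sj \<in> W0 R" using W0_comp[OF vW sjW] .
  have isW: "?sj \<circ> v' \<in> W0 R" using W0_comp[OF sjW v'W] .
  have isv: "\<forall>x. (v \<circ> ?sj) ((?sj \<circ> v') x) = x" using vv' alpha_nz[OF j] by (simp add: rrefl_rrefl)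
  define f1 where "f1 a = nat \<bar>\<lfloor>m \<bullet> coroot a\<rfloor> - (if v' a \<in> Rm then 1 else 0)\<bar>" for a
  define f2 where "f2 a = nat \<bar>\<lfloor>m \<bullet> coroot a\<rfloor> - (if (?sj \<circ> v') a \<in> Rm then 1 else 0)\<bar>" for a
  have LU: "len R alpha U = (\<Sum>a\<in>Rp. f1 a)"
    unfolding U_def f1_def using LF[OF vW v'W vv' m] .
  have LUs: "len R alpha (U \<circ> ?sj) = (\<Sum>a\<in>Rp. f2 a)"
    unfolding Usj f2_def using LF[OF vsW isW isv m] .
  have same: "f1 a = f2 a" if a: "a \<in> Rp - {?a}" for a
  proof -
    let ?b = "v' a"
    have bR: "?b \<in> R" using W0_R[OF v'W] a Rp_sub by blast
    have b1: "?b \<noteq> - alpha j"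
    proof
      assume "?b = - alpha j"
      then have "a = v (- alpha j)" using vv' by metis
      then have "a = ?a" using W0_neg[OF vW] va by simp
      then show False using a by simp
    qed
    have b2: "?b \<noteq> alpha j"
    proof
      assume "?b = alpha j"
      then have "a = - ?a" using vv' va by metis
      then show False using a aRp neg_Rp_Rm Rp_not_Rm by auto
    qed
    have "(?sj ?b \<in> Rm) = (?b \<in> Rm)"
    proof (cases "?b \<in> Rp")
      case True
      then have "?sj ?b \<in> Rp" using SR[OF j True b2] by blast
      then show ?thesis using True Rp_not_Rm by blast
    next
      case False
      then have bm: "?b \<in> Rm" using bR R_split by blast
      then have nb: "- ?b \<in> Rp" using Rm_iff by blast
      have "- ?b \<noteq> alpha j" using b1 by (metis minus_minus)
      then have "?sj (- ?b) \<in> Rp" using SR[OF j nb] by blast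
      then have "?sj ?b \<in> Rm" using linear_neg[OF linear_rrefl] Rm_iff by (metis minus_minus)
      then show ?thesis using bm by simp
    qed
    then show ?thesis by (simp add: f1_def f2_def)
  qed
  have fm: "\<lfloor>m \<bullet> coroot ?a\<rfloor> = 1" using m1 by simp
  have f1a: "f1 ?a = 0" using v'a fm alpha_Rp[OF j] neg_Rp_Rm by (simp add: f1_def)
  have f2a: "f2 ?a = 1"
  proof -
    have "(?sj \<circ> v') ?a = alpha j" using v'a alpha_nz[OF j] by (simp add: rrefl_self linear_neg[OF linear_rrefl])
    then show ?thesis using fm alpha_Rp[OF j] Rp_not_Rm by (simp add: f2_def)
  qed
  have "len R alpha (U \<circ> ?sj) = f2 ?a + (\<Sum>a\<in>Rp - {?a}. f2 a)" using LUs sum.remove[OF finRp aRp] by simp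
  also have "(\<Sum>a\<in>Rp - {?a}. f2 a) = (\<Sum>a\<in>Rp - {?a}. f1 a)" using same by simp
  also have "f2 ?a + (\<Sum>a\<in>Rp - {?a}. f1 a) = 1 + len R alpha U"
    using LU sum.remove[OF finRp aRp, of f1] f1a f2a by simp
  finally have L1: "len R alpha (U \<circ> ?sj) = 1 + len R alpha U" .
  have Lsj: "len R alpha ?sj = 1" using len_W0[OF sjW] inv_refl_alpha[OF j] by simp
  have s0f: "s0 R alpha = (\<lambda>x. rrefl ?a x + ?a)"
    by (rule ext) (simp add: s0_def rrefl_def algebra_simps)
  have Ls0: "len R alpha (s0 R alpha) = 1"
  proof -
    have raW: "rrefl ?a \<in> W0 R" using refl_W0[OF aR] .
    have inv: "\<forall>x. rrefl ?a (rrefl ?a x) = x" using a0 by (simp add: rrefl_rrefl)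
    define g where "g b = nat \<bar>\<lfloor>?a \<bullet> coroot b\<rfloor> - (if rrefl ?a b \<in> Rm then 1 else 0)\<bar>" for b
    have L: "len R alpha (s0 R alpha) = (\<Sum>b\<in>Rp. g b)"
      unfolding s0f g_def using LF[OF raW raW inv R_weights[OF aR]] .
    have ga: "g ?a = 1"
    proof -
      have "rrefl ?a ?a \<in> Rm" using a0 aRp neg_Rp_Rm by (simp add: rrefl_self)
      then show ?thesis using inner_coroot_self[OF a0] by (simp add: g_def)
    qed
    have go: "g b = 0" if b: "b \<in> Rp - {?a}" for b
    proof -
      have bRp: "b \<in> Rp" and bne: "b \<noteq> ?a" using b by auto
      have bR: "b \<in> R" using Rp_sub[OF bRp] .
      have t0: "0 \<le> ?a \<bullet> coroot b" using dom0 bRp by (simp add: dom_iff)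
      have t1: "?a \<bullet> coroot b \<le> 1" using alpha0_le1[OF dom0 bRp bne] .
      have tI: "?a \<bullet> coroot b \<in> \<int>" using integral[OF bR aR] .
      show ?thesis
      proof (cases "?a \<bullet> coroot b = 0")
        case True
        then have "?a \<bullet> b = 0" using nz[OF bR] by (simp add: coroot_def)
        then have "b \<bullet> coroot ?a = 0" by (simp add: coroot_def inner_commute)
        then have "rrefl ?a b = b" by (simp add: rrefl_def)
        then show ?thesis using True bRp Rp_not_Rm by (simp add: g_def)
      next
        case False
        then have t: "?a \<bullet> coroot b = 1" using t0 t1 tI int_pos_ge1 by force
        have "coroot (rrefl ?a b) = coroot b - coroot ?a" using refl_coroot_gen[OF a0, of b] t by simp
        then have "coroot (- rrefl ?a b) = coroot ?a - coroot b" by (simp add: coroot_neg)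
        then have "coroot (- rrefl ?a b) \<in> C" using alpha0_high[OF bRp] by simp
        then have "- rrefl ?a b \<in> Rp"
          using coroot_C root_C neg_root refl_closed[OF aR bR] by blast
        then have "rrefl ?a b \<in> Rm" using Rm_iff by blast
        then show ?thesis using t by (simp add: g_def)
      qed
    qed
    have "(\<Sum>b\<in>Rp. g b) = g ?a + (\<Sum>b\<in>Rp - {?a}. g b)" using sum.remove[OF finRp aRp] by simp
    also have "\<dots> = 1" using ga go by simp
    finally show ?thesis using L by simp
  qed
  have UW: "U \<in> Waff R" unfolding Waff_def U_def using vW m by blast
  have sjA: "?sj \<in> Waff R" unfolding Waff_def using sjW weights_zero
    by (intro CollectI bexI[of _ ?sj] bexI[of _ 0]) auto
  have s0A: "s0 R alpha \<in> Waff R" unfolding Waff_def s0f using refl_W0[OF aR] R_weights[OF aR] by blast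
  have qm: "\<forall>v\<in>Waff R. \<forall>w\<in>Waff R. len R alpha (v \<circ> w) = len R alpha v + len R alpha w \<longrightarrow> q (v \<circ> w) = q v * q w"
    and qnz: "\<forall>w\<in>Waff R. q w \<noteq> 0"
    using q_mult by (auto simp: length_multiplicative_def)
  have e1: "q (U \<circ> ?sj) = q U * q ?sj" using qm UW sjA L1 Lsj by simp
  have e2: "q (s0 R alpha \<circ> U) = q (s0 R alpha) * q U" using qm UW s0A L1 Ls0 comm by simp
  have "q U * q ?sj = q (s0 R alpha) * q U" using e1 e2 comm by metis
  then have "q U * q ?sj = q U * q (s0 R alpha)" by (simp add: mult.commute)
  moreover have "q U \<noteq> 0" using qnz UW by blast
  ultimately show ?thesis by simp
qed

lemma weights_diff: "x \<in> weights R \<Longrightarrow> y \<in> weights R \<Longrightarrow> x - y \<in> weights R"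
  by (simp add: weights_def inner_diff_left Ints_diff)

theorem main_rs:
  assumes q_mult: "length_multiplicative R alpha q"
    and omega_dom: "om \<in> dominant R alpha"
    and omega_min: "minuscule R alpha om \<or> quasi_minuscule R alpha om"
    and lambda_dom: "lam \<in> dominant R alpha"
    and nu_orbit: "nu \<in> (\<lambda>w. w om) ` W0 R"
  shows "(dom_rep R alpha (lam - nu) \<noteq> lam \<longrightarrow>
            wmin R alpha (lam - nu) \<in> stab R lam \<and>
            (nu \<in> inv_set R alpha (wmin R alpha (lam - nu)) \<longrightarrow> theta R alpha (lam - nu) = 1) \<and>
            (nu \<notin> inv_set R alpha (wmin R alpha (lam - nu)) \<longrightarrow> theta R alpha (lam - nu) = 0))
       \<and> (dom_rep R alpha (lam - nu) = lam \<longrightarrow>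
            (\<exists>j\<in>{Suc 0..DIM('a)}. wmin R alpha (lam - nu) nu = - alpha j \<and>
               rrefl (alpha j) \<circ> wmin R alpha (lam - nu) \<in> stab R lam \<and>
               theta R alpha (lam - nu) = 0 \<and>
               inv_set R alpha (wmin R alpha (lam - nu)) =
                 inv_set R alpha (rrefl (alpha j) \<circ> wmin R alpha (lam - nu)) \<union> {nu} \<and>
               q (rrefl (alpha j)) = q (s0 R alpha)))"
proof -
  obtain y where y: "y \<in> W0 R" "nu = y om" using nu_orbit by blast
  have omw: "om \<in> weights R" using omega_dom dom_iff by blast
  have nuw: "nu \<in> weights R" using W0_weights[OF y(1) omw] y(2) by simp
  have lamw: "lam \<in> weights R" using lambda_dom dom_iff by blast
  let ?mu = "lam - nu"
  have muw: "?mu \<in> weights R" using weights_diff[OF lamw nuw] .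
  have om0: "om \<noteq> 0"
  proof
    assume o: "om = 0"
    show False
    proof (cases "minuscule R alpha om")
      case True then show False using o by (simp add: minuscule_def)
    next
      case False then have "om = alpha0 R alpha" using omega_min by (simp add: quasi_minuscule_def)
      then show False using o alpha0_Rp Rp_sub zero_notin by metis
    qed
  qed
  have nu0: "nu \<noteq> 0"
  proof
    assume "nu = 0"
    then have "y om = y 0" using y(2) orth_zero[OF W0_orth[OF y(1)]] by simp
    then show False using W0_inj[OF y(1)] om0 by blast
  qed
  have smallom: "\<forall>c\<in>Rp. c \<noteq> om \<longrightarrow> 0 \<le> om \<bullet> coroot c \<and> om \<bullet> coroot c \<le> 1"
  proof (intro ballI impI)
    fix c assume c: "c \<in> Rp" "c \<noteq> om"
    show "0 \<le> om \<bullet> coroot c \<and> om \<bullet> coroot c \<le> 1"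
    proof (cases "minuscule R alpha om")
      case True then show ?thesis using c by (auto simp: minuscule_def)
    next
      case False
      then have q: "om = alpha0 R alpha" using omega_min by (simp add: quasi_minuscule_def)
      have "0 \<le> om \<bullet> coroot c" using omega_dom c by (simp add: dom_iff)
      moreover have "om \<bullet> coroot c \<le> 1" using alpha0_le1[of c] omega_dom c q by simp
      ultimately show ?thesis by simp
    qed
  qed
  have Snu: "\<forall>v\<in>W0 R. \<forall>b\<in>R. b \<noteq> v nu \<longrightarrow> b \<noteq> - v nu \<longrightarrow> \<bar>v nu \<bullet> coroot b\<bar> \<le> 1"
  proof (intro ballI impI)
    fix v b assume v: "v \<in> W0 R" and b: "b \<in> R" "b \<noteq> v nu" "b \<noteq> - v nu"
    have vy: "v \<circ> y \<in> W0 R" using W0_comp[OF v y(1)] .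
    show "\<bar>v nu \<bullet> coroot b\<bar> \<le> 1" using small_orbit[OF smallom vy b(1)] b y(2) by simp
  qed
  obtain w0 where w0: "w0 \<in> W0 R" "w0 ?mu \<in> dominant R alpha" "inv_set R alpha w0 \<subseteq> Neg ?mu"
    using EX[OF muw] by blast
  have WM0: "wmin R alpha ?mu = w0" "inv_set R alpha w0 = Neg ?mu" using WM[OF w0] by auto
  have dr: "dom_rep R alpha ?mu = w0 ?mu" by (simp add: dom_rep_def WM0(1))
  have th: "theta R alpha ?mu = (\<Sum>b\<in>Neg ?mu. - (?mu \<bullet> coroot b) - 1)"
    using theta_formula[OF w0] WM0(2) by simp
  have nunu: "nu \<bullet> coroot nu = 2" using inner_coroot_self[OF nu0] .
  have Fa: "lam \<bullet> coroot b = 0 \<and> nu \<bullet> coroot b = 1" if b: "b \<in> Neg ?mu" "b \<noteq> nu" for b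
  proof -
    have bRp: "b \<in> Rp" and neg: "?mu \<bullet> coroot b < 0" using b(1) by (auto simp: Neg_def)
    have bR: "b \<in> R" using Rp_sub[OF bRp] .
    have l0: "0 \<le> lam \<bullet> coroot b" using lambda_dom bRp by (simp add: dom_iff)
    have lI: "lam \<bullet> coroot b \<in> \<int>" using weights_int[OF lamw bR] .
    have nI: "nu \<bullet> coroot b \<in> \<int>" using weights_int[OF nuw bR] .
    have ne: "?mu \<bullet> coroot b = lam \<bullet> coroot b - nu \<bullet> coroot b" by (simp add: inner_diff_left)
    have bnn: "b \<noteq> - nu"
    proof
      assume "b = - nu"
      then have "nu \<bullet> coroot b = -2" using nunu by (simp add: coroot_neg)
      then show False using neg ne l0 by simp
    qed
    have ab: "\<bar>nu \<bullet> coroot b\<bar> \<le> 1" using Snu[rule_format, OF W0.W0_id bR] b(2) bnn by simp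
    have pos: "0 < nu \<bullet> coroot b" using neg ne l0 by simp
    have "1 \<le> nu \<bullet> coroot b" using int_pos_ge1[OF nI pos] .
    then have n1: "nu \<bullet> coroot b = 1" using ab by (simp add: abs_le_iff)
    then have lt: "lam \<bullet> coroot b < 1" using neg ne by simp
    have "lam \<bullet> coroot b = 0"
    proof (rule ccontr)
      assume "lam \<bullet> coroot b \<noteq> 0"
      then have "0 < lam \<bullet> coroot b" using l0 by simp
      then have "1 \<le> lam \<bullet> coroot b" using int_pos_ge1[OF lI] by simp
      then show False using lt by simp
    qed
    then show ?thesis using n1 by simp
  qed
  have lnu_cases: "lam \<bullet> coroot nu = 0 \<or> lam \<bullet> coroot nu = 1" if nN: "nu \<in> Neg ?mu"
  proof -
    have nRp: "nu \<in> Rp" and neg: "?mu \<bullet> coroot nu < 0" using nN by (auto simp: Neg_def)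
    have l0: "0 \<le> lam \<bullet> coroot nu" using lambda_dom nRp by (simp add: dom_iff)
    have lI: "lam \<bullet> coroot nu \<in> \<int>" using weights_int[OF lamw Rp_sub[OF nRp]] .
    have l2: "lam \<bullet> coroot nu < 2" using neg nunu by (simp add: inner_diff_left)
    obtain z where z: "lam \<bullet> coroot nu = of_int z" using lI real_int_cases by blast
    have "0 \<le> z" using z l0 by simp
    moreover have "z < 2" using z l2 by simp
    ultimately have "z = 0 \<or> z = 1" by auto
    then show ?thesis using z by auto
  qed
  show ?thesis
  proof (rule conjI; rule impI)
    assume ne: "dom_rep R alpha ?mu \<noteq> lam"
    have nul: "lam \<bullet> coroot nu = 0" if nN: "nu \<in> Neg ?mu"
    proof (rule ccontr)
      assume "lam \<bullet> coroot nu \<noteq> 0"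
      then have l1: "lam \<bullet> coroot nu = 1" using lnu_cases[OF nN] by blast
      have nRp: "nu \<in> Rp" using nN by (simp add: Neg_def)
      have nR: "nu \<in> R" using Rp_sub[OF nRp] .
      have "?mu \<bullet> coroot nu = -1" using l1 nunu by (simp add: inner_diff_left)
      then have "rrefl nu ?mu = lam" by (simp add: rrefl_def)
      then have mu_eq: "?mu = rrefl nu lam" using nu0 by (metis rrefl_rrefl)
      have wW: "w0 \<circ> rrefl nu \<in> W0 R" using W0_comp[OF w0(1) refl_W0[OF nR]] .
      have "(w0 \<circ> rrefl nu) lam = w0 ?mu" using mu_eq by simp
      then have "(w0 \<circ> rrefl nu) lam = lam" using F2[OF wW lambda_dom] w0(2) by simp
      then have "w0 ?mu = lam" using mu_eq by simp
      then show False using ne dr by simp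
    qed
    have z: "\<forall>b\<in>inv_set R alpha w0. lam \<bullet> coroot b = 0"
    proof
      fix b assume "b \<in> inv_set R alpha w0"
      then have bN: "b \<in> Neg ?mu" using WM0(2) by simp
      show "lam \<bullet> coroot b = 0"
      proof (cases "b = nu")
        case True then show ?thesis using nul bN by simp
      next
        case False then show ?thesis using Fa[OF bN False] by simp
      qed
    qed
    have stab0: "w0 lam = lam" using stab_lemma[OF w0(1) lambda_dom z] .
    define f where "f b = - (?mu \<bullet> coroot b) - 1" for b
    have f0: "f b = 0" if b: "b \<in> Neg ?mu - {nu}" for b
      using Fa[of b] b by (simp add: f_def inner_diff_left)
    have sumf: "(\<Sum>b\<in>Neg ?mu. f b) = (if nu \<in> Neg ?mu then 1 else 0)"
    proof (cases "nu \<in> Neg ?mu")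
      case True
      have "(\<Sum>b\<in>Neg ?mu. f b) = f nu + (\<Sum>b\<in>Neg ?mu - {nu}. f b)" using sum.remove[OF finNeg True] by simp
      also have "\<dots> = f nu" using f0 by simp
      also have "\<dots> = 1" using nul[OF True] nunu by (simp add: f_def inner_diff_left)
      finally show ?thesis using True by simp
    next
      case False
      then have "(\<Sum>b\<in>Neg ?mu. f b) = 0" using f0 by (intro sum.neutral) auto
      then show ?thesis using False by simp
    qed
    have thv: "theta R alpha ?mu = (if nu \<in> Neg ?mu then 1 else 0)" using th sumf by (simp add: f_def)
    show "wmin R alpha ?mu \<in> stab R lam \<and>
          (nu \<in> inv_set R alpha (wmin R alpha ?mu) \<longrightarrow> theta R alpha ?mu = 1) \<and>
          (nu \<notin> inv_set R alpha (wmin R alpha ?mu) \<longrightarrow> theta R alpha ?mu = 0)"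
      using WM0 w0(1) stab0 thv by (simp add: stab_def)
  next
    assume eq: "dom_rep R alpha ?mu = lam"
    have w0mu: "w0 ?mu = lam" using eq dr by simp
    have lnu: "lam \<bullet> coroot nu = 1"
    proof -
      have "?mu \<bullet> ?mu = w0 ?mu \<bullet> w0 ?mu" using W0_inner[OF w0(1)] by simp
      then have "?mu \<bullet> ?mu = lam \<bullet> lam" using w0mu by simp
      then have "2 * (lam \<bullet> nu) = nu \<bullet> nu" by (simp add: inner_diff_left inner_diff_right inner_commute algebra_simps)
      moreover have "0 < nu \<bullet> nu" using nu0 by simp
      ultimately show ?thesis by (simp add: coroot_def)
    qed
    have nuN: "nu \<in> Neg ?mu"
    proof (rule ccontr)
      assume nN: "nu \<notin> Neg ?mu"
      have "\<forall>b\<in>inv_set R alpha w0. lam \<bullet> coroot b = 0"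
        using Fa WM0(2) nN by auto
      then have "w0 lam = lam" using stab_lemma[OF w0(1) lambda_dom] by blast
      then have "w0 lam = w0 ?mu" using w0mu by simp
      then have "lam = ?mu" using W0_inj[OF w0(1)] by blast
      then show False using nu0 by simp
    qed
    have nRp: "nu \<in> Rp" using nuN by (simp add: Neg_def)
    have nR: "nu \<in> R" using Rp_sub[OF nRp] .
    have quasi: "om = alpha0 R alpha"
    proof (cases "minuscule R alpha om")
      case True
      have "\<forall>c\<in>Rp. 0 \<le> om \<bullet> coroot c \<and> om \<bullet> coroot c \<le> 1" using True by (auto simp: minuscule_def)
      then have "\<bar>y om \<bullet> coroot nu\<bar> \<le> 1" using small_orbit_all[OF _ y(1) nR] by blast
      then show ?thesis using y(2) nunu by simp
    next
      case False then show ?thesis using omega_min by (simp add: quasi_minuscule_def)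
    qed
    let ?T = "{b \<in> Rp. lam \<bullet> coroot b = 0 \<and> nu \<bullet> coroot b = 1}"
    obtain n :: nat where hn: "ht nu = real n" using ht_Rp[OF nRp] by blast
    have "\<exists>u'\<in>W0 R. \<exists>j\<in>{Suc 0..DIM('a)}. u' lam = lam \<and> u' nu = alpha j \<and> inv_set R alpha u' \<subseteq> ?T"
      by (rule Q[OF lambda_dom Snu lnu, of n, rule_format, OF W0.W0_id]) (simp_all add: nRp hn inv_set_id)
    then obtain u j where u: "u \<in> W0 R" "j \<in> {Suc 0..DIM('a)}" "u lam = lam" "u nu = alpha j" "inv_set R alpha u \<subseteq> ?T"
      by blast
    let ?sj = "rrefl (alpha j)"
    let ?w = "?sj \<circ> u"
    have wW: "?w \<in> W0 R" using W0_comp[OF rrefl_alpha_W0[OF u(2)] u(1)] .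
    have laj: "lam \<bullet> coroot (alpha j) = 1" using W0_pair[OF u(1), of lam nu] u(3) u(4) lnu by simp
    have wmu: "?w ?mu = lam"
    proof -
      have "u ?mu = lam - alpha j" using u(3) u(4) by (simp add: orth_diff[OF W0_orth[OF u(1)]])
      then have "?w ?mu = ?sj (lam - alpha j)" by simp
      also have "\<dots> = ?sj lam - ?sj (alpha j)" by (rule linear_diff[OF linear_rrefl])
      also have "?sj lam = lam - alpha j" using laj by (simp add: rrefl_def)
      also have "?sj (alpha j) = - alpha j" using alpha_nz[OF u(2)] by (rule rrefl_self)
      finally show ?thesis by simp
    qed
    have iw: "inv_set R alpha ?w \<subseteq> insert nu (inv_set R alpha u)"
    proof
      fix a assume a: "a \<in> inv_set R alpha ?w"
      then have aRp: "a \<in> Rp" and m: "?sj (u a) \<in> Rm" by (auto simp: inv_set_def)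
      have uaR: "u a \<in> R" using W0_R[OF u(1) Rp_sub[OF aRp]] .
      show "a \<in> insert nu (inv_set R alpha u)"
      proof (cases "u a \<in> Rm")
        case True then show ?thesis using aRp by (simp add: inv_set_def)
      next
        case False
        then have "u a \<in> Rp" using uaR R_split by blast
        then have "u a = alpha j" using SR_neg[OF u(2) _ m] by blast
        then have "a = nu" using u(4) W0_inj[OF u(1)] by metis
        then show ?thesis by simp
      qed
    qed
    have iwN: "inv_set R alpha ?w \<subseteq> Neg ?mu"
    proof
      fix a assume "a \<in> inv_set R alpha ?w"
      then have "a \<in> insert nu (inv_set R alpha u)" using iw by blast
      then show "a \<in> Neg ?mu"
      proof
        assume "a = nu" then show ?thesis using nuN by simp
      next
        assume "a \<in> inv_set R alpha u"
        then have "a \<in> ?T" using u(5) by blast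
        then show ?thesis by (simp add: Neg_def inner_diff_left)
      qed
    qed
    have wdom: "?w ?mu \<in> dominant R alpha" using wmu lambda_dom by simp
    have WMw: "wmin R alpha ?mu = ?w" using WM[OF wW wdom iwN] by blast
    have wnu: "?w nu = - alpha j" using u(4) alpha_nz[OF u(2)] by (simp add: rrefl_self)
    have sw: "?sj \<circ> ?w = u" using alpha_nz[OF u(2)] by (simp add: fun_eq_iff rrefl_rrefl)
    have thw: "theta R alpha ?mu = 0"
    proof -
      have "theta R alpha ?mu = (\<Sum>b\<in>inv_set R alpha ?w. - (?mu \<bullet> coroot b) - 1)"
        using theta_formula[OF wW wdom iwN] .
      also have "\<dots> = 0"
      proof (rule sum.neutral, rule ballI)
        fix b assume "b \<in> inv_set R alpha ?w"
        then have "b \<in> insert nu (inv_set R alpha u)" using iw by blast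
        then show "- (?mu \<bullet> coroot b) - 1 = 0"
        proof
          assume "b = nu" then show ?thesis using lnu nunu by (simp add: inner_diff_left)
        next
          assume "b \<in> inv_set R alpha u"
          then have "b \<in> ?T" using u(5) by blast
          then show ?thesis by (simp add: inner_diff_left)
        qed
      qed
      finally show ?thesis .
    qed
    have ieq: "inv_set R alpha ?w = inv_set R alpha u \<union> {nu}"
    proof
      show "inv_set R alpha ?w \<subseteq> inv_set R alpha u \<union> {nu}" using iw by blast
      show "inv_set R alpha u \<union> {nu} \<subseteq> inv_set R alpha ?w"
      proof
        fix a assume a: "a \<in> inv_set R alpha u \<union> {nu}"
        show "a \<in> inv_set R alpha ?w"
        proof (cases "a = nu")
          case True
          then show ?thesis using nRp wnu alpha_Rp[OF u(2)] neg_Rp_Rm by (simp add: inv_set_def)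
        next
          case False
          then have ai: "a \<in> inv_set R alpha u" using a by blast
          then have aRp: "a \<in> Rp" and um: "u a \<in> Rm" by (auto simp: inv_set_def)
          have nua: "- u a \<in> Rp" using um Rm_iff by blast
          have "- u a \<noteq> alpha j"
          proof
            assume "- u a = alpha j"
            then have "u (- a) = u nu" using W0_neg[OF u(1)] u(4) by simp
            then have "- a = nu" using W0_inj[OF u(1)] by blast
            then show False using aRp nRp neg_Rp_Rm Rp_not_Rm by (metis minus_minus)
          qed
          then have "?sj (- u a) \<in> Rp" using SR[OF u(2) nua] by blast
          then have "?sj (u a) \<in> Rm" using linear_neg[OF linear_rrefl] Rm_iff by (metis minus_minus)
          then show ?thesis using aRp by (simp add: inv_set_def)
        qed
      qed
    qed
    have qeq: "q ?sj = q (s0 R alpha)"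
    proof -
      have dom0: "alpha0 R alpha \<in> dominant R alpha" using omega_dom quasi by simp
      have zW: "u \<circ> y \<in> W0 R" using W0_comp[OF u(1) y(1)] .
      have za: "(u \<circ> y) (alpha0 R alpha) = alpha j" using u(4) y(2) quasi by simp
      let ?m = "winv y lam"
      have mw: "?m \<in> weights R" using W0_weights[OF winv_W0[OF y(1)] lamw] .
      have m1: "?m \<bullet> coroot (alpha0 R alpha) = 1"
        using W0_pair[OF y(1), of ?m "alpha0 R alpha"] winv_r[OF y(1)] y(2) quasi lnu by simp
      show ?thesis using q_eq[OF q_mult dom0 zW u(2) za mw m1] .
    qed
    show "\<exists>j\<in>{Suc 0..DIM('a)}. wmin R alpha ?mu nu = - alpha j \<and>
               rrefl (alpha j) \<circ> wmin R alpha ?mu \<in> stab R lam \<and>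
               theta R alpha ?mu = 0 \<and>
               inv_set R alpha (wmin R alpha ?mu) =
                 inv_set R alpha (rrefl (alpha j) \<circ> wmin R alpha ?mu) \<union> {nu} \<and>
               q (rrefl (alpha j)) = q (s0 R alpha)"
    proof (rule bexI[of _ j])
      show "j \<in> {Suc 0..DIM('a)}" by (rule u(2))
      show "wmin R alpha ?mu nu = - alpha j \<and>
               rrefl (alpha j) \<circ> wmin R alpha ?mu \<in> stab R lam \<and>
               theta R alpha ?mu = 0 \<and>
               inv_set R alpha (wmin R alpha ?mu) =
                 inv_set R alpha (rrefl (alpha j) \<circ> wmin R alpha ?mu) \<union> {nu} \<and>
               q (rrefl (alpha j)) = q (s0 R alpha)"
        unfolding WMw sw using wnu u(1,3) thw ieq qeq by (simp add: stab_def)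
    qed
  qed
qed

end

theorem mainTheorem18:
  fixes R :: "'a::euclidean_space set" and alpha :: "nat \<Rightarrow> 'a"
    and q :: "('a \<Rightarrow> 'a) \<Rightarrow> real" and om lam nu :: 'a
  assumes root_system: "irreducible_reduced_crystallographic_root_system R"
    and base: "is_base R alpha"
    and q_mult: "length_multiplicative R alpha q"
    and omega_dom: "om \<in> dominant R alpha"
    and omega_min: "minuscule R alpha om \<or> quasi_minuscule R alpha om"
    and lambda_dom: "lam \<in> dominant R alpha"
    and nu_orbit: "nu \<in> (\<lambda>w. w om) ` W0 R"
  shows "(dom_rep R alpha (lam - nu) \<noteq> lam \<longrightarrow>
            wmin R alpha (lam - nu) \<in> stab R lam \<and>
            (nu \<in> inv_set R alpha (wmin R alpha (lam - nu)) \<longrightarrow> theta R alpha (lam - nu) = 1) \<and>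
            (nu \<notin> inv_set R alpha (wmin R alpha (lam - nu)) \<longrightarrow> theta R alpha (lam - nu) = 0))
       \<and> (dom_rep R alpha (lam - nu) = lam \<longrightarrow>
            (\<exists>j\<in>{1..DIM('a)}. wmin R alpha (lam - nu) nu = - alpha j \<and>
               rrefl (alpha j) \<circ> wmin R alpha (lam - nu) \<in> stab R lam \<and>
               theta R alpha (lam - nu) = 0 \<and>
               inv_set R alpha (wmin R alpha (lam - nu)) =
                 inv_set R alpha (rrefl (alpha j) \<circ> wmin R alpha (lam - nu)) \<union> {nu} \<and>
               q (rrefl (alpha j)) = q (s0 R alpha)))"
proof -
  interpret rs R alpha by (rule rs.intro[OF root_system base])
  show ?thesis using main_rs[OF q_mult omega_dom omega_min lambda_dom nu_orbit] by simp
qed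

end
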